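(* Let $\xi_1,\xi_2,\ldots$ be i.i.d.\ nonnegative real random variables with $\overline F(x):=\P(\xi_1\geq x)=x^{-1}\ell(x)$ for $x\to\infty$, where $\ell$ is slowly varying. Let $G(x):=\int_0^x\overline F(t)\,dt$, $S_n:=\sum_{i=1}^n\xi_i$, $M_n:=\max\{\xi_1,\ldots,\xi_n\}$. Let $(x_n)_{n\geq1}$ be a positive sequence with $\liminf_{n\to\infty}\frac{x_n}{nG(x_n)}>0$ and let $(a_n)_{n\geq1}$ be a positive sequence with $\lim_{n\to\infty}a_n=:a\in(0,\infty)$. Then, as $n\to\infty$, $$\P(S_n-nG(x_n)\geq a_nx_n)\sim \P(S_n-nG(x_n)\geq a_nx_n,\ M_n\geq a_nx_n)\sim \P(M_n\geq a_nx_n)\sim a^{-1}n\overline F(x_n)=o(1).$$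
   Context: A function $\ell$ is slowly varying if $\ell(\lambda x)/\ell(x)\to1$ as $x\to\infty$ for every $\lambda>0$. For sequences, $u_n\sim v_n$ means $u_n/v_n\to1$ as $n\to\infty$. *)

theory Defs
  imports "HOL-Probability.Probability" "HOL-Library.Landau_Symbols"
begin

definition slowly_varying :: "(real \<Rightarrow> real) \<Rightarrow> bool" where
  "slowly_varying l \<longleftrightarrow> (\<forall>c>0. ((\<lambda>x. l (c * x) / l x) \<longlongrightarrow> 1) at_top)"

end

theory Submission
  imports Defs
begin

lemma two_pow_twice: "(2::real)^(j*2) = 4^j"
  by (induct j) auto

lemma min_sq_dyadic:
  fixes v w :: real
  assumes "v \<ge> 0" "w \<ge> 0"
  shows "(min v w)^2 \<le> (\<Sum>j<J. (w/2^j)^2 * (if v \<ge> w/2^(j+1) then 1 else 0)) + (w/2^J)^2"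
proof (induction J)
  case 0
  then show ?case using assms by (simp add: min_def power_mono)
next
  case (Suc J)
  show ?case
  proof (cases "v \<ge> w/2^(J+1)")
    case True
    show ?thesis using Suc.IH True by (simp, smt (verit) zero_le_power2)
  next
    case False
    have "(min v w)^2 \<le> v^2" using assms by (simp add: min_def power_mono)
    also have "\<dots> \<le> (w/2^(Suc J))^2" using False assms by (intro power_mono) auto
    also have "\<dots> \<le> (\<Sum>j<Suc J. (w/2^j)^2 * (if v \<ge> w/2^(j+1) then 1 else 0)) + (w/2^(Suc J))^2"
      by (intro add_increasing order.refl sum_nonneg) auto
    finally show ?thesis .
  qed
qed

lemma min_lower_dyadic:
  fixes v x :: real
  assumes "v \<ge> 0" "x \<ge> 0"
  shows "(\<Sum>j<K. (x/2^(j+1)) * (if v \<ge> x/2^j then 1 else 0))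
     \<le> (if v < x/2^K then 0 else min v x - x/2^K)"
proof (induction K)
  case 0
  then show ?case using assms by auto
next
  case (Suc K)
  show ?case
  proof (cases "v \<ge> x/2^K")
    case True
    have "x/2^Suc K \<le> x/2^K" using assms by (intro divide_left_mono) auto
    then have "\<not> v < x/2^Suc K" using True by auto
    then show ?thesis using Suc True by auto
  next
    case False
    then have "(\<Sum>j<Suc K. (x/2^(j+1)) * (if v \<ge> x/2^j then 1 else 0)) \<le> 0" using Suc by auto
    moreover have "v < x / 2^K" using False by simp
    moreover have "x/2^Suc K \<le> x/2^K" using assms by (intro divide_left_mono) auto
    moreover have "x / 2^K \<le> x / 1" using assms by (intro divide_left_mono) auto
    ultimately show ?thesis by auto
  qed
qed

locale hv = prob_space M for M :: "'a measure" +
  fixes \<xi> :: "nat \<Rightarrow> 'a \<Rightarrow> real"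
  assumes rv[measurable]: "\<And>i. \<xi> i \<in> borel_measurable M"
    and indep: "indep_vars (\<lambda>_. borel) \<xi> {1..}"
    and ident: "\<And>i. i \<ge> 1 \<Longrightarrow> distr M borel (\<xi> i) = distr M borel (\<xi> 1)"
    and nonneg: "\<And>i \<omega>. i \<ge> 1 \<Longrightarrow> \<omega> \<in> space M \<Longrightarrow> \<xi> i \<omega> \<ge> 0"
begin

definition Fb :: "real \<Rightarrow> real" where
  "Fb t = prob {\<omega> \<in> space M. \<xi> 1 \<omega> \<ge> t}"

definition Gf :: "real \<Rightarrow> real" where
  "Gf s = (LBINT t=0..s. Fb t)"

definition m2 :: "real \<Rightarrow> real" where
  "m2 w = expectation (\<lambda>\<omega>. (min (\<xi> 1 \<omega>) w)^2)"

lemma rv1[measurable]: "\<xi> 1 \<in> borel_measurable M" "\<xi> (Suc 0) \<in> borel_measurable M" using rv by auto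

lemma dist_eq:
  assumes "i \<ge> 1" "B \<in> sets borel"
  shows "prob {\<omega> \<in> space M. \<xi> i \<omega> \<in> B} = prob {\<omega> \<in> space M. \<xi> 1 \<omega> \<in> B}"
proof -
  have "measure (distr M borel (\<xi> i)) B = measure (distr M borel (\<xi> 1)) B"
    using ident[OF assms(1)] by simp
  then have "prob (\<xi> i -` B \<inter> space M) = prob (\<xi> 1 -` B \<inter> space M)"
    using assms rv[of i] rv1 by (simp add: measure_distr)
  moreover have "{\<omega> \<in> space M. \<xi> i \<omega> \<in> B} = \<xi> i -` B \<inter> space M"
     "{\<omega> \<in> space M. \<xi> 1 \<omega> \<in> B} = \<xi> 1 -` B \<inter> space M" by auto
  ultimately show ?thesis by simp
qed

lemma tail_eq:
  assumes "i \<ge> 1"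
  shows "prob {\<omega> \<in> space M. \<xi> i \<omega> \<ge> t} = Fb t"
  using dist_eq[OF assms, of "{t..}"] by (simp add: Fb_def)

lemma exp_eq:
  fixes f :: "real \<Rightarrow> real"
  assumes "i \<ge> 1" "f \<in> borel_measurable borel"
  shows "expectation (\<lambda>\<omega>. f (\<xi> i \<omega>)) = expectation (\<lambda>\<omega>. f (\<xi> 1 \<omega>))"
proof -
  have "integral\<^sup>L (distr M borel (\<xi> i)) f = integral\<^sup>L (distr M borel (\<xi> 1)) f"
    using ident[OF assms(1)] by simp
  then show ?thesis
    using integral_distr[OF rv[of i] assms(2)] integral_distr[OF rv1(1) assms(2)] by simp
qed

lemma Fb_mono: "s \<le> t \<Longrightarrow> Fb t \<le> Fb s"
  unfolding Fb_def by (intro finite_measure_mono) auto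

lemma Fb_nonneg: "Fb t \<ge> 0" unfolding Fb_def by simp
lemma Fb_le1: "Fb t \<le> 1" unfolding Fb_def by simp

lemma Fb_meas[measurable]: "Fb \<in> borel_measurable borel"
proof -
  have "mono (\<lambda>t. - Fb t)" by (auto simp: mono_def intro: Fb_mono)
  then have "(\<lambda>t. - Fb t) \<in> borel_measurable borel" by (rule borel_measurable_mono)
  then have "(\<lambda>t. - (- Fb t)) \<in> borel_measurable borel" by measurable
  then show ?thesis by simp
qed

lemma sq_le_of_abs: "\<bar>a::real\<bar> \<le> b \<Longrightarrow> a^2 \<le> b^2"
  by (metis abs_ge_zero abs_le_square_iff abs_of_nonneg order_trans)

lemma intb:
  fixes f :: "'a \<Rightarrow> real"
  assumes "f \<in> borel_measurable M" "\<And>\<omega>. \<omega> \<in> space M \<Longrightarrow> \<bar>f \<omega>\<bar> \<le> B"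
  shows "integrable M f"
  using assms by (intro integrable_const_bound[where B=B]) auto

lemma indep_pair:
  assumes J: "finite J" "J \<subseteq> {1..}" and i: "i \<ge> 1" "i \<notin> J"
    and A: "A \<in> sets borel" and B: "B \<in> sets borel"
  shows "prob {\<omega>\<in>space M. \<xi> i \<omega> \<in> A \<and> (\<Sum>j\<in>J. min (\<xi> j \<omega>) w) \<in> B}
       = prob {\<omega>\<in>space M. \<xi> i \<omega> \<in> A} * prob {\<omega>\<in>space M. (\<Sum>j\<in>J. min (\<xi> j \<omega>) w) \<in> B}"
proof -
  define Y where "Y j = (if j = i then (\<lambda>v::real. v) else (\<lambda>v. min v w))" for j
  have ind1: "indep_vars (\<lambda>_. borel) \<xi> (insert i J)" using indep_vars_subset[OF indep] J i by auto
  have ind2: "indep_vars (\<lambda>_. borel) (\<lambda>j x. Y j (\<xi> j x)) (insert i J)"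
    by (rule indep_vars_compose2[OF ind1]) (auto simp: Y_def)
  have iv: "indep_var borel (\<lambda>x. Y i (\<xi> i x)) borel (\<lambda>\<omega>. \<Sum>j\<in>J. Y j (\<xi> j \<omega>))"
    using indep_vars_sum[OF J(1) i(2) ind2] by simp
  have e1: "(\<lambda>x. Y i (\<xi> i x)) = \<xi> i" by (auto simp: Y_def)
  have e2: "(\<lambda>\<omega>. \<Sum>j\<in>J. Y j (\<xi> j \<omega>)) = (\<lambda>\<omega>. \<Sum>j\<in>J. min (\<xi> j \<omega>) w)"
    using i(2) by (auto simp: Y_def intro!: ext sum.cong)
  define T where "T = (\<lambda>\<omega>. \<Sum>j\<in>J. min (\<xi> j \<omega>) w)"
  have iv2: "indep_var borel (\<xi> i) borel T" using iv e1 e2 by (simp add: T_def)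
  then have ind: "indep_set (sigma_sets (space M) {\<xi> i -` A \<inter> space M | A. A \<in> sets borel})
      (sigma_sets (space M) {T -` A \<inter> space M | A. A \<in> sets borel})"
    unfolding indep_var_eq by auto
  have "\<xi> i -` A \<inter> space M \<in> sigma_sets (space M) {\<xi> i -` A \<inter> space M | A. A \<in> sets borel}"
    using A by (intro sigma_sets.Basic) auto
  moreover have "T -` B \<inter> space M \<in> sigma_sets (space M) {T -` A \<inter> space M | A. A \<in> sets borel}"
    using B by (intro sigma_sets.Basic) auto
  ultimately have "prob ((\<xi> i -` A \<inter> space M) \<inter> (T -` B \<inter> space M))
     = prob (\<xi> i -` A \<inter> space M) * prob (T -` B \<inter> space M)"
    using ind unfolding indep_sets2_eq by blast
  moreover have "(\<xi> i -` A \<inter> space M) \<inter> (T -` B \<inter> space M) = {\<omega>\<in>space M. \<xi> i \<omega> \<in> A \<and> T \<omega> \<in> B}"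
    "\<xi> i -` A \<inter> space M = {\<omega>\<in>space M. \<xi> i \<omega> \<in> A}" "T -` B \<inter> space M = {\<omega>\<in>space M. T \<omega> \<in> B}"
    by auto
  ultimately show ?thesis by (simp add: T_def)
qed

lemma var_sum:
  assumes "finite J" "J \<subseteq> {1..}" "w \<ge> 0"
  defines "\<mu> \<equiv> expectation (\<lambda>\<omega>. min (\<xi> 1 \<omega>) w)"
  shows "expectation (\<lambda>\<omega>. (\<Sum>j\<in>J. (min (\<xi> j \<omega>) w - \<mu>))^2)
       = real (card J) * expectation (\<lambda>\<omega>. (min (\<xi> 1 \<omega>) w - \<mu>)^2)"
  using assms(1,2)
proof (induction J rule: finite_induct)
  case empty
  then show ?case by simp
next
  case (insert i J)
  define Z where "Z j \<omega> = min (\<xi> j \<omega>) w - \<mu>" for j \<omega>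
  define S where "S \<omega> = (\<Sum>j\<in>J. Z j \<omega>)" for \<omega>
  have i: "i \<ge> 1" using insert by auto
  have J: "J \<subseteq> {1..}" using insert by auto
  have mZ[measurable]: "Z j \<in> borel_measurable M" if "j \<ge> 1" for j
    using rv[of j] unfolding Z_def by measurable
  have mS[measurable]: "S \<in> borel_measurable M"
    unfolding S_def using J by (intro borel_measurable_sum mZ) auto
  have bZ: "\<bar>Z j \<omega>\<bar> \<le> w + \<bar>\<mu>\<bar>" if "j \<ge> 1" "\<omega> \<in> space M" for j \<omega>
    using nonneg[OF that] assms(3) unfolding Z_def by auto
  have bS: "\<bar>S \<omega>\<bar> \<le> real (card J) * (w + \<bar>\<mu>\<bar>)" if "\<omega> \<in> space M" for \<omega>
  proof -
    have "\<bar>S \<omega>\<bar> \<le> (\<Sum>j\<in>J. \<bar>Z j \<omega>\<bar>)" unfolding S_def by (rule sum_abs)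
    also have "\<dots> \<le> (\<Sum>j\<in>J. w + \<bar>\<mu>\<bar>)" using J that by (intro sum_mono bZ) auto
    finally show ?thesis by simp
  qed
  have intZ: "integrable M (Z i)" using bZ[OF i] by (intro intb[where B="w + \<bar>\<mu>\<bar>"] mZ[OF i]) auto
  have intS: "integrable M S" using bS by (intro intb) auto
  have intZ2: "integrable M (\<lambda>\<omega>. (Z i \<omega>)^2)"
    using bZ[OF i] i by (intro intb[where B="(w + \<bar>\<mu>\<bar>)^2"]) (auto intro!: sq_le_of_abs)
  have intS2: "integrable M (\<lambda>\<omega>. (S \<omega>)^2)"
    using bS by (intro intb[where B="(real (card J) * (w + \<bar>\<mu>\<bar>))^2"]) (auto intro!: sq_le_of_abs)
  have intZS: "integrable M (\<lambda>\<omega>. Z i \<omega> * S \<omega>)"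
    using bZ[OF i] bS i assms(3)
    by (intro intb[where B="(w + \<bar>\<mu>\<bar>) * (real (card J) * (w + \<bar>\<mu>\<bar>))"])
       (auto simp: abs_mult intro!: mult_mono)
  have ind1: "indep_vars (\<lambda>_. borel) \<xi> (insert i J)" using indep_vars_subset[OF indep] insert by auto
  have ind2: "indep_vars (\<lambda>_. borel) (\<lambda>j x. (\<lambda>v. min v w - \<mu>) (\<xi> j x)) (insert i J)"
    by (rule indep_vars_compose2[OF ind1]) auto
  have iv: "indep_var borel (Z i) borel S"
    using indep_vars_sum[OF insert(1) insert(2) ind2] by (simp add: Z_def[abs_def] S_def[abs_def])
  have EZ: "expectation (Z i) = 0"
  proof -
    have "expectation (\<lambda>\<omega>. min (\<xi> i \<omega>) w) = \<mu>"
      unfolding \<mu>_def using exp_eq[OF i, of "\<lambda>v. min v w"] by simp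
    moreover have "integrable M (\<lambda>\<omega>. min (\<xi> i \<omega>) w)"
      using nonneg[OF i] assms(3) rv[of i] by (intro intb[where B=w]) auto
    ultimately show ?thesis unfolding Z_def by (simp add: prob_space)
  qed
  have EZS: "expectation (\<lambda>\<omega>. Z i \<omega> * S \<omega>) = 0"
    using indep_var_lebesgue_integral[OF iv intZ intS] EZ by simp
  have EZ2: "expectation (\<lambda>\<omega>. (Z i \<omega>)^2) = expectation (\<lambda>\<omega>. (min (\<xi> 1 \<omega>) w - \<mu>)^2)"
    unfolding Z_def using exp_eq[OF i, of "\<lambda>v. (min v w - \<mu>)^2"] by simp
  have "(\<lambda>\<omega>. (\<Sum>j\<in>insert i J. (min (\<xi> j \<omega>) w - \<mu>))^2) = (\<lambda>\<omega>. (Z i \<omega>)^2 + 2 * (Z i \<omega> * S \<omega>) + (S \<omega>)^2)"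
    using insert(1,2) by (auto simp: Z_def S_def power2_eq_square algebra_simps)
  then have "expectation (\<lambda>\<omega>. (\<Sum>j\<in>insert i J. (min (\<xi> j \<omega>) w - \<mu>))^2)
     = expectation (\<lambda>\<omega>. (Z i \<omega>)^2) + 2 * expectation (\<lambda>\<omega>. Z i \<omega> * S \<omega>) + expectation (\<lambda>\<omega>. (S \<omega>)^2)"
    using intZ2 intZS intS2 by simp
  also have "expectation (\<lambda>\<omega>. (S \<omega>)^2) = real (card J) * expectation (\<lambda>\<omega>. (min (\<xi> 1 \<omega>) w - \<mu>)^2)"
    using insert(3) J by (simp add: S_def Z_def)
  finally show ?case using EZS EZ2 insert(1,2) by (simp add: algebra_simps)
qed

lemma E_min:
  assumes w: "w \<ge> 0"
  shows "expectation (\<lambda>\<omega>. min (\<xi> 1 \<omega>) w) = Gf w"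
proof -
  interpret pM: pair_sigma_finite M lborel ..
  define f where "f \<omega> t = ennreal (indicator {0<..<w} t * (if t \<le> \<xi> 1 \<omega> then 1 else 0))" for \<omega> t
  have fm: "case_prod f \<in> borel_measurable (M \<Otimes>\<^sub>M lborel)"
    unfolding f_def by measurable
  have inner1: "(\<integral>\<^sup>+t. f \<omega> t \<partial>lborel) = ennreal (min (\<xi> 1 \<omega>) w)" if "\<omega> \<in> space M" for \<omega>
  proof -
    have v: "\<xi> 1 \<omega> \<ge> 0" using nonneg[OF _ that] by simp
    have "(\<integral>\<^sup>+t. f \<omega> t \<partial>lborel) = (\<integral>\<^sup>+t. indicator ({0<..<w} \<inter> {..\<xi> 1 \<omega>}) t \<partial>lborel)"
      unfolding f_def by (intro nn_integral_cong) (auto simp: indicator_def)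
    also have "\<dots> = emeasure lborel ({0<..<w} \<inter> {..\<xi> 1 \<omega>})" by simp
    also have "\<dots> = ennreal (min (\<xi> 1 \<omega>) w)"
    proof (cases "\<xi> 1 \<omega> < w")
      case True
      then have "{0<..<w} \<inter> {..\<xi> 1 \<omega>} = {0<..\<xi> 1 \<omega>}" by auto
      then show ?thesis using True v by simp
    next
      case False
      then have "{0<..<w} \<inter> {..\<xi> 1 \<omega>} = {0<..<w}" by auto
      then show ?thesis using False w by simp
    qed
    finally show ?thesis .
  qed
  have inner2: "(\<integral>\<^sup>+\<omega>. f \<omega> t \<partial>M) = ennreal (indicator {0<..<w} t * Fb t)" for t
  proof -
    have "(\<integral>\<^sup>+\<omega>. f \<omega> t \<partial>M) = (\<integral>\<^sup>+\<omega>. indicator {0<..<w} t * indicator {\<omega>\<in>space M. t \<le> \<xi> 1 \<omega>} \<omega> \<partial>M)"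
      unfolding f_def by (intro nn_integral_cong) (auto simp: indicator_def)
    also have "\<dots> = indicator {0<..<w} t * emeasure M {\<omega>\<in>space M. t \<le> \<xi> 1 \<omega>}"
      by (subst nn_integral_cmult) auto
    also have "\<dots> = ennreal (indicator {0<..<w} t * Fb t)"
      by (simp add: Fb_def emeasure_eq_measure indicator_def)
    finally show ?thesis .
  qed
  have "(\<integral>\<^sup>+\<omega>. ennreal (min (\<xi> 1 \<omega>) w) \<partial>M) = (\<integral>\<^sup>+\<omega>. (\<integral>\<^sup>+t. f \<omega> t \<partial>lborel) \<partial>M)"
    using inner1 by (intro nn_integral_cong) simp
  also have "\<dots> = (\<integral>\<^sup>+t. (\<integral>\<^sup>+\<omega>. f \<omega> t \<partial>M) \<partial>lborel)"
    using pM.Fubini'[OF fm] by simp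
  also have "\<dots> = (\<integral>\<^sup>+t. ennreal (indicator {0<..<w} t * Fb t) \<partial>lborel)"
    using inner2 by simp
  finally have eq: "(\<integral>\<^sup>+\<omega>. ennreal (min (\<xi> 1 \<omega>) w) \<partial>M) = (\<integral>\<^sup>+t. ennreal (indicator {0<..<w} t * Fb t) \<partial>lborel)" .
  have "expectation (\<lambda>\<omega>. min (\<xi> 1 \<omega>) w) = enn2real (\<integral>\<^sup>+\<omega>. ennreal (min (\<xi> 1 \<omega>) w) \<partial>M)"
    using nonneg w by (intro integral_eq_nn_integral) auto
  moreover have "Gf w = enn2real (\<integral>\<^sup>+t. ennreal (indicator {0<..<w} t * Fb t) \<partial>lborel)"
  proof -
    have "Gf w = (LINT t:{0<..<w}|lborel. Fb t)"
      unfolding Gf_def using w by (simp add: interval_lebesgue_integral_le_eq zero_ereal_def)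
    also have "\<dots> = (LINT t|lborel. indicator {0<..<w} t * Fb t)"
      by (simp add: set_lebesgue_integral_def)
    also have "\<dots> = enn2real (\<integral>\<^sup>+t. ennreal (indicator {0<..<w} t * Fb t) \<partial>lborel)"
      by (intro integral_eq_nn_integral) (auto simp: Fb_nonneg)
    finally show ?thesis .
  qed
  ultimately show ?thesis using eq by simp
qed

lemma cheb:
  assumes J: "finite J" "J \<subseteq> {1..}" and w: "w \<ge> 0" and s: "s > 0"
  shows "prob {\<omega>\<in>space M. s \<le> \<bar>(\<Sum>j\<in>J. min (\<xi> j \<omega>) w) - real (card J) * Gf w\<bar>}
     \<le> real (card J) * m2 w / s^2"
proof -
  define \<mu> where "\<mu> = expectation (\<lambda>\<omega>. min (\<xi> 1 \<omega>) w)"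
  have mu: "\<mu> = Gf w" unfolding \<mu>_def using E_min[OF w] .
  define u where "u \<omega> = (\<Sum>j\<in>J. (min (\<xi> j \<omega>) w - \<mu>))^2" for \<omega>
  have mu0: "\<mu> \<ge> 0" unfolding \<mu>_def using nonneg w by (intro integral_nonneg_AE) auto
  have mum: "\<mu> \<le> w" unfolding \<mu>_def using w
    by (intro integral_le_const) (auto intro!: intb[where B=w] simp: nonneg)
  have um[measurable]: "u \<in> borel_measurable M"
    unfolding u_def using J rv by (intro borel_measurable_power borel_measurable_sum) auto
  have ub: "\<bar>u \<omega>\<bar> \<le> (real (card J) * (w + \<mu>))^2" if "\<omega> \<in> space M" for \<omega>
  proof -
    have "\<bar>\<Sum>j\<in>J. (min (\<xi> j \<omega>) w - \<mu>)\<bar> \<le> (\<Sum>j\<in>J. \<bar>min (\<xi> j \<omega>) w - \<mu>\<bar>)" by (rule sum_abs)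
    also have "\<dots> \<le> (\<Sum>j\<in>J. w + \<mu>)"
    proof (intro sum_mono)
      fix j assume "j \<in> J"
      then have "\<xi> j \<omega> \<ge> 0" using J nonneg that by auto
      then show "\<bar>min (\<xi> j \<omega>) w - \<mu>\<bar> \<le> w + \<mu>" using w mu0 by auto
    qed
    finally have "\<bar>\<Sum>j\<in>J. (min (\<xi> j \<omega>) w - \<mu>)\<bar> \<le> real (card J) * (w + \<mu>)" by simp
    then show ?thesis unfolding u_def by (simp add: sq_le_of_abs)
  qed
  have uint: "integrable M u" using ub by (intro intb) auto
  have "AE x in M. 0 \<le> u x" by (simp add: u_def)
  then have "prob {\<omega>\<in>space M. u \<omega> \<ge> s^2} \<le> expectation u / s^2"
    using integral_Markov_inequality_measure[OF uint sets.top] s by simp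
  also have "expectation u = real (card J) * expectation (\<lambda>\<omega>. (min (\<xi> 1 \<omega>) w - \<mu>)^2)"
    unfolding u_def \<mu>_def using var_sum[OF J w] by simp
  also have "expectation (\<lambda>\<omega>. (min (\<xi> 1 \<omega>) w - \<mu>)^2) \<le> m2 w"
  proof -
    have i1: "integrable M (\<lambda>\<omega>. min (\<xi> 1 \<omega>) w)" using w by (intro intb[where B=w]) (auto simp: nonneg)
    have i2: "integrable M (\<lambda>\<omega>. (min (\<xi> 1 \<omega>) w)^2)" using w
      by (intro intb[where B="w^2"]) (auto simp: nonneg intro!: sq_le_of_abs)
    have "(\<lambda>\<omega>. (min (\<xi> 1 \<omega>) w - \<mu>)^2) = (\<lambda>\<omega>. (min (\<xi> 1 \<omega>) w)^2 - 2 * \<mu> * min (\<xi> 1 \<omega>) w + \<mu>^2)"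
      by (auto simp: power2_eq_square algebra_simps)
    then have "expectation (\<lambda>\<omega>. (min (\<xi> 1 \<omega>) w - \<mu>)^2) = m2 w - 2 * \<mu> * \<mu> + \<mu>^2"
      using i1 i2 by (simp add: m2_def \<mu>_def prob_space)
    then show ?thesis by (simp add: power2_eq_square)
  qed
  finally have A: "prob {\<omega>\<in>space M. u \<omega> \<ge> s^2} \<le> real (card J) * m2 w / s^2"
    using s by (simp add: divide_right_mono mult_left_mono)
  have "{\<omega>\<in>space M. s \<le> \<bar>(\<Sum>j\<in>J. min (\<xi> j \<omega>) w) - real (card J) * Gf w\<bar>} = {\<omega>\<in>space M. u \<omega> \<ge> s^2}"
  proof -
    have "(\<Sum>j\<in>J. (min (\<xi> j \<omega>) w - \<mu>)) = (\<Sum>j\<in>J. min (\<xi> j \<omega>) w) - real (card J) * Gf w" for \<omega>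
      by (simp add: sum_subtractf mu)
    moreover have "s \<le> \<bar>a\<bar> \<longleftrightarrow> s^2 \<le> a^2" for a :: real
      using s abs_le_square_iff[of s a] by simp
    ultimately show ?thesis unfolding u_def by auto
  qed
  then show ?thesis using A by simp
qed

lemma m2_bound:
  assumes t0: "t0 > 0" "Fb t0 > 0" and pot: "\<And>t. t \<ge> t0 \<Longrightarrow> Fb (t/2) \<le> 3 * Fb t"
    and w: "w \<ge> t0"
  shows "m2 w \<le> (12 + 1 / Fb t0) * w^2 * Fb w"
proof -
  have "\<exists>J. w / 2^J < t0"
  proof -
    have "(\<lambda>j. w / 2^j) \<longlonglongrightarrow> 0"
      by (intro LIMSEQ_divide_realpow_zero) auto
    then have "\<forall>\<^sub>F j in sequentially. w / 2^j < t0" using t0 by (intro order_tendstoD) auto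
    then show ?thesis by (meson eventually_sequentially order.refl)
  qed
  define J where "J = (LEAST J. w / 2^J < t0)"
  have J1: "w / 2^J < t0" unfolding J_def by (rule LeastI_ex) fact
  have J2: "w / 2^j \<ge> t0" if "j < J" for j
    using not_less_Least[of j "\<lambda>J. w / 2^J < t0"] that unfolding J_def by auto
  have it: "Fb (w / 2^j) \<le> 3^j * Fb w" if "j \<le> J" for j
    using that
  proof (induction j)
    case 0
    then show ?case by simp
  next
    case (Suc j)
    have "Fb (w / 2^Suc j) = Fb ((w/2^j)/2)" by (simp add: mult.commute)
    also have "\<dots> \<le> 3 * Fb (w/2^j)" using J2[of j] Suc by (intro pot) auto
    also have "\<dots> \<le> 3 * (3^j * Fb w)" using Suc by simp
    finally show ?case by simp
  qed
  have Fw: "Fb w \<ge> 0" by (rule Fb_nonneg)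
  have pt: "(min (\<xi> 1 \<omega>) w)^2 \<le> (\<Sum>j<J. (w/2^j)^2 * indicator {\<omega>\<in>space M. w/2^(j+1) \<le> \<xi> 1 \<omega>} \<omega>) + (w/2^J)^2"
    if "\<omega> \<in> space M" for \<omega>
  proof -
    have e: "(\<Sum>j<J. (w/2^j)^2 * indicator {\<omega>\<in>space M. w/2^(j+1) \<le> \<xi> 1 \<omega>} \<omega>)
       = (\<Sum>j<J. (w/2^j)^2 * (if \<xi> 1 \<omega> \<ge> w/2^(j+1) then 1 else 0))"
      by (intro sum.cong) (auto simp: indicator_def that)
    show ?thesis unfolding e by (rule min_sq_dyadic) (use nonneg[OF _ that] w t0 in auto)
  qed
  have i2: "integrable M (\<lambda>\<omega>. (min (\<xi> 1 \<omega>) w)^2)" using w t0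
    by (intro intb[where B="w^2"]) (auto simp: nonneg intro!: sq_le_of_abs)
  define E where "E j = {\<omega>\<in>space M. w/2^(j+1) \<le> \<xi> 1 \<omega>}" for j
  have Eev: "E j \<in> events" for j unfolding E_def by measurable
  have iE: "integrable M (\<lambda>\<omega>. (w/2^j)^2 * indicator (E j) \<omega>)" for j
    apply (rule integrable_mult_right)
    apply (rule integrable_real_indicator)
    using Eev by (auto simp: emeasure_eq_measure)
  have iS: "integrable M (\<lambda>\<omega>. (\<Sum>j<J. (w/2^j)^2 * indicator (E j) \<omega>))"
    by (rule Bochner_Integration.integrable_sum) (rule iE)
  have "m2 w \<le> expectation (\<lambda>\<omega>. (\<Sum>j<J. (w/2^j)^2 * indicator (E j) \<omega>) + (w/2^J)^2)"
  proof -
    have "integrable M (\<lambda>\<omega>. (\<Sum>j<J. (w/2^j)^2 * indicator (E j) \<omega>) + (w/2^J)^2)"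
      by (rule Bochner_Integration.integrable_add[OF iS]) simp
    then show ?thesis unfolding m2_def using pt i2 by (intro integral_mono) (auto simp: E_def)
  qed
  also have "\<dots> = expectation (\<lambda>\<omega>. (\<Sum>j<J. (w/2^j)^2 * indicator (E j) \<omega>)) + (w/2^J)^2"
    by (subst Bochner_Integration.integral_add[OF iS]) (auto simp: prob_space)
  also have "expectation (\<lambda>\<omega>. (\<Sum>j<J. (w/2^j)^2 * indicator (E j) \<omega>)) = (\<Sum>j<J. expectation (\<lambda>\<omega>. (w/2^j)^2 * indicator (E j) \<omega>))"
    by (rule Bochner_Integration.integral_sum) (rule iE)
  also have "(\<Sum>j<J. expectation (\<lambda>\<omega>. (w/2^j)^2 * indicator (E j) \<omega>)) = (\<Sum>j<J. (w/2^j)^2 * Fb (w/2^(j+1)))"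
  proof (intro sum.cong refl)
    fix j
    have "expectation (\<lambda>\<omega>. (w/2^j)^2 * indicator (E j) \<omega>) = (w/2^j)^2 * expectation (indicator (E j))"
      by (rule Bochner_Integration.integral_mult_right_zero)
    also have "expectation (indicator (E j) :: 'a \<Rightarrow> real) = prob (E j)"
      using Eev by (simp add: emeasure_eq_measure)
    finally show "expectation (\<lambda>\<omega>. (w/2^j)^2 * indicator (E j) \<omega>) = (w/2^j)^2 * Fb (w/2^(j+1))"
      by (simp add: E_def Fb_def)
  qed
  also have "(\<Sum>j<J. (w/2^j)^2 * Fb (w/2^(j+1))) + (w/2^J)^2 \<le> (\<Sum>j<J. w^2 * Fb w * 3 * (3/4)^j) + w^2 * Fb w / Fb t0"
  proof (intro add_mono sum_mono)
    fix j assume "j \<in> {..<J}"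
    then have "Fb (w/2^(j+1)) \<le> 3^(j+1) * Fb w" using it[of "j+1"] by (simp add: mult.commute)
    then have "(w/2^j)^2 * Fb (w/2^(j+1)) \<le> (w/2^j)^2 * (3^(j+1) * Fb w)" by (intro mult_left_mono) auto
    also have "\<dots> = w^2 * Fb w * 3 * (3/4)^j" by (simp add: power_divide power_mult_distrib field_simps two_pow_twice flip: power_mult)
    finally show "(w/2^j)^2 * Fb (w/2^(j+1)) \<le> w^2 * Fb w * 3 * (3/4)^j" .
  next
    have "Fb t0 \<le> Fb (w / 2^J)" using J1 by (intro Fb_mono) auto
    also have "\<dots> \<le> 3^J * Fb w" using it by simp
    finally have a: "Fb t0 \<le> 3^J * Fb w" .
    have "(w/2^J)^2 = w^2 / 4^J" by (simp add: power_divide two_pow_twice flip: power_mult_distrib power_mult)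
    also have "\<dots> \<le> w^2 / 3^J" by (intro divide_left_mono power_mono) auto
    also have "\<dots> \<le> w^2 * Fb w / Fb t0"
    proof -
      have "Fb t0 * w^2 \<le> (Fb w * 3^J) * w^2" using a by (intro mult_right_mono) (auto simp: mult.commute)
      then show ?thesis using t0 by (simp add: field_simps)
    qed
    finally show "(w/2^J)^2 \<le> w^2 * Fb w / Fb t0" .
  qed
  also have "(\<Sum>j<J. w^2 * Fb w * 3 * (3/4::real)^j) = w^2 * Fb w * 3 * (\<Sum>j<J. (3/4::real)^j)"
    by (simp add: sum_distrib_left)
  also have "(\<Sum>j<J. (3/4::real)^j) \<le> 4"
  proof -
    have "(\<Sum>j<J. (3/4::real)^j) = (1 - (3/4)^J) / (1 - 3/4)" by (subst sum_gp_strict) auto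
    also have "\<dots> \<le> 4" by simp
    finally show ?thesis .
  qed
  then have "w^2 * Fb w * 3 * (\<Sum>j<J. (3/4::real)^j) \<le> w^2 * Fb w * 3 * 4" using Fw by (intro mult_left_mono) auto
  finally show ?thesis using t0 by (simp add: field_simps add_mono)
qed

lemma int_min[simp]:
  assumes w: "w \<ge> 0"
  shows "integrable M (\<lambda>\<omega>. min (\<xi> 1 \<omega>) w)" "integrable M (\<lambda>\<omega>. min (\<xi> (Suc 0) \<omega>) w)"
proof -
  show "integrable M (\<lambda>\<omega>. min (\<xi> 1 \<omega>) w)" using w by (intro intb[where B=w]) (auto simp: nonneg)
  then show "integrable M (\<lambda>\<omega>. min (\<xi> (Suc 0) \<omega>) w)" by simp
qed

lemma G_eq: "w \<ge> 0 \<Longrightarrow> Gf w = expectation (\<lambda>\<omega>. min (\<xi> 1 \<omega>) w)"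
  using E_min by simp

lemma G_nonneg: assumes "w \<ge> 0" shows "Gf w \<ge> 0"
  using G_eq[of w] assms by (auto intro!: integral_nonneg_AE simp: nonneg)

lemma G_le: assumes "w \<ge> 0" shows "Gf w \<le> w"
  using G_eq[of w] assms by (auto intro!: integral_le_const simp: nonneg)

lemma G_mono: assumes "0 \<le> a" "a \<le> b" shows "Gf a \<le> Gf b"
  using G_eq[of a] G_eq[of b] assms by (auto intro!: integral_mono)

lemma G_lower1: assumes "z \<ge> 0" shows "min z 1 * Fb 1 \<le> Gf z"
proof -
  define E where "E = {\<omega>\<in>space M. 1 \<le> \<xi> 1 \<omega>}"
  have Eev: "E \<in> events" unfolding E_def by measurable
  have iE: "integrable M (\<lambda>\<omega>. min z 1 * indicator E \<omega>)"
    apply (rule integrable_mult_right)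
    apply (rule integrable_real_indicator)
    using Eev by (auto simp: emeasure_eq_measure)
  have "expectation (\<lambda>\<omega>. min z 1 * indicator E \<omega>) = min z 1 * expectation (indicator E)"
    by (rule Bochner_Integration.integral_mult_right_zero)
  also have "expectation (indicator E :: 'a \<Rightarrow> real) = prob E"
    using Eev by (simp add: emeasure_eq_measure)
  finally have "min z 1 * Fb 1 = expectation (\<lambda>\<omega>. min z 1 * indicator E \<omega>)"
    by (simp add: E_def Fb_def)
  also have "\<dots> \<le> expectation (\<lambda>\<omega>. min (\<xi> 1 \<omega>) z)"
    using assms iE nonneg by (intro integral_mono) (auto simp: E_def indicator_def)
  finally show ?thesis using G_eq assms by simp
qed

lemma G_lower:
  assumes x: "x \<ge> 0"
  shows "(\<Sum>j<K. (x/2^(j+1)) * Fb (x/2^j)) \<le> Gf x"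
proof -
  define E where "E j = {\<omega>\<in>space M. x/2^j \<le> \<xi> 1 \<omega>}" for j
  have Eev: "E j \<in> events" for j unfolding E_def by measurable
  have iE: "integrable M (\<lambda>\<omega>. (x/2^(j+1)) * indicator (E j) \<omega>)" for j
    apply (rule integrable_mult_right)
    apply (rule integrable_real_indicator)
    using Eev by (auto simp: emeasure_eq_measure)
  have iS: "integrable M (\<lambda>\<omega>. (\<Sum>j<K. (x/2^(j+1)) * indicator (E j) \<omega>))"
    by (rule Bochner_Integration.integrable_sum) (rule iE)
  have "(\<Sum>j<K. (x/2^(j+1)) * Fb (x/2^j)) = (\<Sum>j<K. expectation (\<lambda>\<omega>. (x/2^(j+1)) * indicator (E j) \<omega>))"
  proof (intro sum.cong refl)
    fix j
    have "expectation (\<lambda>\<omega>. (x/2^(j+1)) * indicator (E j) \<omega>) = (x/2^(j+1)) * expectation (indicator (E j))"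
      by (rule Bochner_Integration.integral_mult_right_zero)
    also have "expectation (indicator (E j) :: 'a \<Rightarrow> real) = prob (E j)"
      using Eev by (simp add: emeasure_eq_measure)
    finally show "(x/2^(j+1)) * Fb (x/2^j) = expectation (\<lambda>\<omega>. (x/2^(j+1)) * indicator (E j) \<omega>)"
      by (simp add: E_def Fb_def)
  qed
  also have "\<dots> = expectation (\<lambda>\<omega>. (\<Sum>j<K. (x/2^(j+1)) * indicator (E j) \<omega>))"
    by (rule Bochner_Integration.integral_sum[symmetric]) (rule iE)
  also have "\<dots> \<le> expectation (\<lambda>\<omega>. min (\<xi> 1 \<omega>) x)"
  proof (rule integral_mono[OF iS])
    show "integrable M (\<lambda>\<omega>. min (\<xi> 1 \<omega>) x)" using x by simp
    fix \<omega> assume om: "\<omega> \<in> space M"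
    have e: "(\<Sum>j<K. (x/2^(j+1)) * indicator (E j) \<omega>) = (\<Sum>j<K. (x/2^(j+1)) * (if \<xi> 1 \<omega> \<ge> x/2^j then 1 else 0))"
      by (intro sum.cong) (auto simp: indicator_def E_def om)
    have v: "\<xi> 1 \<omega> \<ge> 0" using nonneg om by simp
    have "(\<Sum>j<K. (x/2^(j+1)) * (if \<xi> 1 \<omega> \<ge> x/2^j then 1 else 0))
       \<le> (if \<xi> 1 \<omega> < x/2^K then 0 else min (\<xi> 1 \<omega>) x - x/2^K)"
      by (rule min_lower_dyadic[OF v x])
    also have "\<dots> \<le> min (\<xi> 1 \<omega>) x"
    proof -
      have h: "0 \<le> x/2^K" using x by simp
      show ?thesis using v x h by (smt (verit))
    qed
    finally show "(\<Sum>j<K. (x/2^(j+1)) * indicator (E j) \<omega>) \<le> min (\<xi> 1 \<omega>) x" unfolding e .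
  qed
  finally show ?thesis using G_eq x by simp
qed

lemma sv_ratio:
  assumes sv: "slowly_varying l" and tl: "\<forall>\<^sub>F t in at_top. Fb t = l t / t" and c: "c > 0"
  shows "((\<lambda>t. Fb (c*t) / Fb t) \<longlongrightarrow> 1/c) at_top"
proof -
  have "((\<lambda>t. l (c*t) / l t) \<longlongrightarrow> 1) at_top" using sv c unfolding slowly_varying_def by blast
  then have lim: "((\<lambda>t. l (c*t) / l t / c) \<longlongrightarrow> 1/c) at_top"
    using c by (intro tendsto_divide tendsto_const) auto
  obtain N where N: "\<And>t. t \<ge> N \<Longrightarrow> Fb t = l t / t" using tl by (auto simp: eventually_at_top_linorder)
  have "\<forall>\<^sub>F t in at_top. l (c*t) / l t / c = Fb (c*t) / Fb t"
    unfolding eventually_at_top_linorder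
  proof (intro exI[of _ "max 1 (max N (N/c))"] allI impI)
    fix t assume t: "t \<ge> max 1 (max N (N/c))"
    then have "t \<ge> N" "c*t \<ge> N" "t > 0" using c by (auto simp: field_simps)
    then have "Fb t = l t / t" "Fb (c*t) = l (c*t) / (c*t)" using N by auto
    then have e: "l t = t * Fb t" "l (c*t) = c * t * Fb (c*t)" using \<open>t > 0\<close> c by auto
    show "l (c*t) / l t / c = Fb (c*t) / Fb t" unfolding e using \<open>t > 0\<close> c
      by (cases "Fb t = 0") (simp_all add: field_simps)
  qed
  then show ?thesis by (rule Lim_transform_eventually[OF lim])
qed

lemma pair_ind:
  assumes "i \<ge> 1" "j \<ge> 1" "i \<noteq> j"
  shows "prob {\<omega>\<in>space M. \<xi> i \<omega> \<ge> y \<and> \<xi> j \<omega> \<ge> y} = (Fb y)^2"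
proof -
  have "prob {\<omega>\<in>space M. \<xi> i \<omega> \<in> {y..} \<and> (\<Sum>k\<in>{j}. min (\<xi> k \<omega>) y) \<in> {y..}}
     = prob {\<omega>\<in>space M. \<xi> i \<omega> \<in> {y..}} * prob {\<omega>\<in>space M. (\<Sum>k\<in>{j}. min (\<xi> k \<omega>) y) \<in> {y..}}"
    using assms by (intro indep_pair) auto
  moreover have "{\<omega>\<in>space M. \<xi> i \<omega> \<in> {y..} \<and> (\<Sum>k\<in>{j}. min (\<xi> k \<omega>) y) \<in> {y..}}
      = {\<omega>\<in>space M. \<xi> i \<omega> \<ge> y \<and> \<xi> j \<omega> \<ge> y}" by auto
  moreover have "{\<omega>\<in>space M. (\<Sum>k\<in>{j}. min (\<xi> k \<omega>) y) \<in> {y..}} = {\<omega>\<in>space M. \<xi> j \<omega> \<ge> y}" by auto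
  moreover have "{\<omega>\<in>space M. \<xi> i \<omega> \<in> {y..}} = {\<omega>\<in>space M. \<xi> i \<omega> \<ge> y}" by auto
  ultimately show ?thesis using tail_eq assms by (simp add: power2_eq_square)
qed

lemma P3_upper: "prob {\<omega>\<in>space M. \<exists>i\<in>{1..n}. \<xi> i \<omega> \<ge> y} \<le> real n * Fb y"
proof -
  have "{\<omega>\<in>space M. \<exists>i\<in>{1..n}. \<xi> i \<omega> \<ge> y} = (\<Union>i\<in>{1..n}. {\<omega>\<in>space M. \<xi> i \<omega> \<ge> y})" by auto
  also have "prob \<dots> \<le> (\<Sum>i\<in>{1..n}. prob {\<omega>\<in>space M. \<xi> i \<omega> \<ge> y})"
    by (intro finite_measure_subadditive_finite) auto
  also have "\<dots> = (\<Sum>i\<in>{1..n}. Fb y)" by (intro sum.cong refl tail_eq) auto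
  finally show ?thesis by simp
qed

lemma P3_lower: "prob {\<omega>\<in>space M. \<exists>i\<in>{1..n}. \<xi> i \<omega> \<ge> y} \<ge> real n * Fb y - (real n)^2 * (Fb y)^2"
proof (induction n)
  case 0
  then show ?case by simp
next
  case (Suc k)
  define U where "U = {\<omega>\<in>space M. \<exists>i\<in>{1..k}. \<xi> i \<omega> \<ge> y}"
  define A where "A = {\<omega>\<in>space M. \<xi> (Suc k) \<omega> \<ge> y}"
  have Uev: "U \<in> events" unfolding U_def by measurable
  have Aev: "A \<in> events" unfolding A_def by measurable
  have eq: "{\<omega>\<in>space M. \<exists>i\<in>{1..Suc k}. \<xi> i \<omega> \<ge> y} = U \<union> (A - (A \<inter> U))"
    unfolding U_def A_def by (auto simp: le_Suc_eq, drule bspec[of _ _ "Suc k"], auto)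
  have e1: "prob (U \<union> (A - (A \<inter> U))) = prob U + prob (A - (A \<inter> U))"
    using Uev Aev by (intro finite_measure_Union) auto
  have e2: "prob (A - (A \<inter> U)) = prob A - prob (A \<inter> U)"
    using Uev Aev by (intro finite_measure_Diff) auto
  have e3: "prob A = Fb y" unfolding A_def by (rule tail_eq) simp
  have e4: "prob (A \<inter> U) \<le> real k * (Fb y)^2"
  proof -
    have "A \<inter> U = (\<Union>i\<in>{1..k}. {\<omega>\<in>space M. \<xi> (Suc k) \<omega> \<ge> y \<and> \<xi> i \<omega> \<ge> y})"
      unfolding A_def U_def by auto
    also have "prob \<dots> \<le> (\<Sum>i\<in>{1..k}. prob {\<omega>\<in>space M. \<xi> (Suc k) \<omega> \<ge> y \<and> \<xi> i \<omega> \<ge> y})"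
      by (intro finite_measure_subadditive_finite) auto
    also have "\<dots> = (\<Sum>i\<in>{1..k}. (Fb y)^2)" by (intro sum.cong refl pair_ind) auto
    finally show ?thesis by simp
  qed
  have "prob (U \<union> (A - (A \<inter> U))) \<ge> prob U + Fb y - real k * (Fb y)^2" using e1 e2 e3 e4 by linarith
  moreover have "prob U \<ge> real k * Fb y - (real k)^2 * (Fb y)^2" using Suc unfolding U_def .
  moreover have "real k * (Fb y)^2 + (real k)^2 * (Fb y)^2 \<le> (real (Suc k))^2 * (Fb y)^2"
    by (simp add: power2_eq_square algebra_simps)
  ultimately show ?case unfolding eq by (simp add: algebra_simps)
qed

lemma m2_nonneg: "m2 w \<ge> 0"
  unfolding m2_def by simp

lemma cheb_card:
  assumes J: "J \<subseteq> {1..n}" and w: "w \<ge> 0" and s: "s > 0"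
  shows "prob {\<omega>\<in>space M. s \<le> \<bar>(\<Sum>j\<in>J. min (\<xi> j \<omega>) w) - real (card J) * Gf w\<bar>}
     \<le> real n * m2 w / s^2"
proof -
  have fin: "finite J" using J finite_subset by blast
  have "card J \<le> card {1..n}" using J by (intro card_mono) auto
  then have "real (card J) \<le> real n" by simp
  then have "real (card J) * m2 w / s^2 \<le> real n * m2 w / s^2"
    using m2_nonneg by (intro divide_right_mono mult_right_mono) auto
  moreover have "J \<subseteq> {1..}" using J by auto
  ultimately show ?thesis using cheb[OF fin _ w s] by force
qed

lemma P32:
  assumes n: "n \<ge> 1" and y: "y > 0" and x: "x \<ge> 0" and d: "\<delta> > 0" and Gx: "Gf x \<le> \<delta>*y/2"
  shows "prob {\<omega>\<in>space M. \<exists>i\<in>{1..n}. \<xi> i \<omega> \<ge> y}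
       - prob {\<omega>\<in>space M. (\<Sum>i\<in>{1..n}. \<xi> i \<omega>) - real n * Gf x \<ge> y \<and> (\<exists>i\<in>{1..n}. \<xi> i \<omega> \<ge> y)}
     \<le> real n * (Fb y - Fb ((1+\<delta>)*y)) + real n * Fb ((1+\<delta>)*y) * (real n * m2 x / (\<delta>*y/2)^2)"
proof -
  define I where "I = {1..n}"
  define E3 where "E3 = {\<omega>\<in>space M. \<exists>i\<in>I. \<xi> i \<omega> \<ge> y}"
  define E2 where "E2 = {\<omega>\<in>space M. (\<Sum>i\<in>I. \<xi> i \<omega>) - real n * Gf x \<ge> y \<and> (\<exists>i\<in>I. \<xi> i \<omega> \<ge> y)}"
  define R where "R i \<omega> = (\<Sum>j\<in>I-{i}. min (\<xi> j \<omega>) x)" for i \<omega>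
  define B where "B i = {\<omega>\<in>space M. \<xi> i \<omega> \<ge> y} - {\<omega>\<in>space M. \<xi> i \<omega> \<ge> (1+\<delta>)*y}" for i
  define C where "C i = {\<omega>\<in>space M. \<xi> i \<omega> \<in> {(1+\<delta>)*y..} \<and> R i \<omega> \<in> {..<real n * Gf x - \<delta>*y}}" for i
  have E3ev: "E3 \<in> events" unfolding E3_def I_def by measurable
  have E2ev: "E2 \<in> events" unfolding E2_def I_def by measurable
  have Bev: "B i \<in> events" for i unfolding B_def by measurable
  have Cev: "C i \<in> events" for i unfolding C_def R_def by measurable
  have sub: "E3 - E2 \<subseteq> (\<Union>i\<in>I. B i \<union> C i)"
  proof
    fix \<omega> assume om: "\<omega> \<in> E3 - E2"
    then obtain i where i: "i \<in> I" "\<xi> i \<omega> \<ge> y" and sp: "\<omega> \<in> space M" unfolding E3_def by auto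
    have lt: "(\<Sum>i\<in>I. \<xi> i \<omega>) - real n * Gf x < y" using om i sp unfolding E2_def E3_def by auto
    show "\<omega> \<in> (\<Union>i\<in>I. B i \<union> C i)"
    proof (cases "\<xi> i \<omega> < (1+\<delta>)*y")
      case True
      then have "\<omega> \<in> B i" using i sp unfolding B_def by auto
      then show ?thesis using i by auto
    next
      case False
      have "(\<Sum>i\<in>I. \<xi> i \<omega>) = \<xi> i \<omega> + (\<Sum>j\<in>I-{i}. \<xi> j \<omega>)"
        using i by (subst sum.remove[of I i]) (auto simp: I_def)
      moreover have "R i \<omega> \<le> (\<Sum>j\<in>I-{i}. \<xi> j \<omega>)" unfolding R_def by (intro sum_mono) auto
      ultimately have "R i \<omega> < real n * Gf x - \<delta>*y" using lt False by (simp add: algebra_simps)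
      then have "\<omega> \<in> C i" using False sp unfolding C_def by auto
      then show ?thesis using i by auto
    qed
  qed
  have "prob E3 - prob E2 = prob (E3 - E2)"
    using E3ev E2ev by (subst finite_measure_Diff) (auto simp: E2_def E3_def)
  also have "\<dots> \<le> prob (\<Union>i\<in>I. B i \<union> C i)"
    using sub Bev Cev by (intro finite_measure_mono) (auto simp: I_def)
  also have "\<dots> \<le> (\<Sum>i\<in>I. prob (B i \<union> C i))"
    using Bev Cev by (intro finite_measure_subadditive_finite) (auto simp: I_def)
  also have "\<dots> \<le> (\<Sum>i\<in>I. (Fb y - Fb ((1+\<delta>)*y)) + Fb ((1+\<delta>)*y) * (real n * m2 x / (\<delta>*y/2)^2))"
  proof (intro sum_mono)
    fix i assume i: "i \<in> I"
    then have i1: "i \<ge> 1" unfolding I_def by auto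
    have "prob (B i \<union> C i) \<le> prob (B i) + prob (C i)"
      using Bev Cev by (intro measure_subadditive) auto
    also have "prob (B i) = Fb y - Fb ((1+\<delta>)*y)"
    proof -
      have yd: "y \<le> (1+\<delta>)*y" using y d by (simp add: algebra_simps)
      show ?thesis
        unfolding B_def using y d i1 by (subst finite_measure_Diff) (auto simp: tail_eq dest: order_trans[OF yd])
    qed
    also have "prob (C i) = Fb ((1+\<delta>)*y) * prob {\<omega>\<in>space M. R i \<omega> \<in> {..<real n * Gf x - \<delta>*y}}"
    proof -
      have "prob (C i) = prob {\<omega>\<in>space M. \<xi> i \<omega> \<in> {(1+\<delta>)*y..}} * prob {\<omega>\<in>space M. R i \<omega> \<in> {..<real n * Gf x - \<delta>*y}}"
        unfolding C_def R_def using i1 by (intro indep_pair) (auto simp: I_def)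
      moreover have "prob {\<omega>\<in>space M. \<xi> i \<omega> \<in> {(1+\<delta>)*y..}} = Fb ((1+\<delta>)*y)"
        using tail_eq[OF i1] by simp
      ultimately show ?thesis by simp
    qed
    also have "prob {\<omega>\<in>space M. R i \<omega> \<in> {..<real n * Gf x - \<delta>*y}} \<le> real n * m2 x / (\<delta>*y/2)^2"
    proof -
      have cI: "card (I - {i}) = n - 1" using i by (simp add: I_def)
      have "{\<omega>\<in>space M. R i \<omega> \<in> {..<real n * Gf x - \<delta>*y}}
          \<subseteq> {\<omega>\<in>space M. \<delta>*y/2 \<le> \<bar>R i \<omega> - real (card (I - {i})) * Gf x\<bar>}"
      proof (intro subsetI)
        fix \<omega> assume "\<omega> \<in> {\<omega>\<in>space M. R i \<omega> \<in> {..<real n * Gf x - \<delta>*y}}"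
        then have sp: "\<omega> \<in> space M" and "R i \<omega> < real n * Gf x - \<delta>*y" by auto
        moreover have cR: "real (card (I - {i})) = real n - 1" using cI n by simp
        moreover have "real n * Gf x = Gf x + real (card (I - {i})) * Gf x" by (simp add: cR ring_distribs)
        ultimately have h1: "R i \<omega> < Gf x + real (card (I - {i})) * Gf x - \<delta>*y"
          by linarith
        have h2: "- (R i \<omega> - real (card (I - {i})) * Gf x) \<le> \<bar>R i \<omega> - real (card (I - {i})) * Gf x\<bar>"
          by (rule abs_ge_minus_self)
        from h1 h2 Gx have "\<delta>*y/2 \<le> \<bar>R i \<omega> - real (card (I - {i})) * Gf x\<bar>" by linarith
        then show "\<omega> \<in> {\<omega>\<in>space M. \<delta>*y/2 \<le> \<bar>R i \<omega> - real (card (I - {i})) * Gf x\<bar>}"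
          using sp by simp
      qed
      then have "prob {\<omega>\<in>space M. R i \<omega> \<in> {..<real n * Gf x - \<delta>*y}}
          \<le> prob {\<omega>\<in>space M. \<delta>*y/2 \<le> \<bar>R i \<omega> - real (card (I - {i})) * Gf x\<bar>}"
        by (intro finite_measure_mono) (unfold R_def, measurable)
      also have "\<dots> \<le> real n * m2 x / (\<delta>*y/2)^2"
        unfolding R_def using x y d by (intro cheb_card) (auto simp: I_def)
      finally show ?thesis .
    qed
    then have "Fb ((1+\<delta>)*y) * prob {\<omega>\<in>space M. R i \<omega> \<in> {..<real n * Gf x - \<delta>*y}}
        \<le> Fb ((1+\<delta>)*y) * (real n * m2 x / (\<delta>*y/2)^2)"
      by (intro mult_left_mono Fb_nonneg)
    finally show "prob (B i \<union> C i) \<le> (Fb y - Fb ((1+\<delta>)*y)) + Fb ((1+\<delta>)*y) * (real n * m2 x / (\<delta>*y/2)^2)"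
      by simp
  qed
  also have "\<dots> = real n * (Fb y - Fb ((1+\<delta>)*y)) + real n * Fb ((1+\<delta>)*y) * (real n * m2 x / (\<delta>*y/2)^2)"
    by (simp add: I_def algebra_simps)
  finally show ?thesis unfolding E3_def E2_def I_def .
qed

lemma P12:
  assumes n: "n \<ge> 1" and y: "y > 0" and w: "w > 0" "w \<le> x" and d: "0 < \<delta>" "\<delta> < 1"
  shows "prob {\<omega>\<in>space M. (\<Sum>i\<in>{1..n}. \<xi> i \<omega>) - real n * Gf x \<ge> y}
       - prob {\<omega>\<in>space M. (\<Sum>i\<in>{1..n}. \<xi> i \<omega>) - real n * Gf x \<ge> y \<and> (\<exists>i\<in>{1..n}. \<xi> i \<omega> \<ge> y)}
     \<le> (real n)^2 * (Fb w)^2 + real n * (Fb ((1-\<delta>)*y) - Fb y)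
        + real n * Fb w * (real n * m2 w / (\<delta>*y)^2) + real n * m2 w / y^2"
proof -
  define I where "I = {1..n}"
  define G where "G = Gf x"
  define E1 where "E1 = {\<omega>\<in>space M. (\<Sum>i\<in>I. \<xi> i \<omega>) - real n * G \<ge> y}"
  define E2 where "E2 = {\<omega>\<in>space M. (\<Sum>i\<in>I. \<xi> i \<omega>) - real n * G \<ge> y \<and> (\<exists>i\<in>I. \<xi> i \<omega> \<ge> y)}"
  define R where "R i \<omega> = (\<Sum>j\<in>I-{i}. min (\<xi> j \<omega>) w)" for i \<omega>
  define T where "T \<omega> = (\<Sum>j\<in>I. min (\<xi> j \<omega>) w)" for \<omega>
  define Aa where "Aa = (\<Union>i\<in>I. \<Union>j\<in>I-{i}. {\<omega>\<in>space M. \<xi> i \<omega> \<ge> w \<and> \<xi> j \<omega> \<ge> w})"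
  define Bb where "Bb = (\<Union>i\<in>I. {\<omega>\<in>space M. \<xi> i \<omega> \<ge> (1-\<delta>)*y} - {\<omega>\<in>space M. \<xi> i \<omega> \<ge> y})"
  define Cc where "Cc = (\<Union>i\<in>I. {\<omega>\<in>space M. \<xi> i \<omega> \<in> {w..} \<and> R i \<omega> \<in> {real n * G + \<delta>*y..}})"
  define Dd where "Dd = {\<omega>\<in>space M. T \<omega> \<ge> real n * G + y}"
  have finI: "finite I" unfolding I_def by simp
  have E1ev: "E1 \<in> events" unfolding E1_def I_def by measurable
  have E2ev: "E2 \<in> events" unfolding E2_def I_def by measurable
  have Aaev: "Aa \<in> events" unfolding Aa_def I_def by measurable
  have Bbev: "Bb \<in> events" unfolding Bb_def I_def by measurable
  have Ccev: "Cc \<in> events" unfolding Cc_def R_def I_def by measurable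
  have Ddev: "Dd \<in> events" unfolding Dd_def T_def I_def by measurable
  have sub: "E1 - E2 \<subseteq> Aa \<union> Bb \<union> Cc \<union> Dd"
  proof
    fix \<omega> assume om: "\<omega> \<in> E1 - E2"
    then have sp: "\<omega> \<in> space M" and ge: "(\<Sum>i\<in>I. \<xi> i \<omega>) - real n * G \<ge> y" and
      lty: "\<And>i. i \<in> I \<Longrightarrow> \<xi> i \<omega> < y"
      unfolding E1_def E2_def by auto
    show "\<omega> \<in> Aa \<union> Bb \<union> Cc \<union> Dd"
    proof (cases "\<exists>i\<in>I. \<exists>j\<in>I-{i}. \<xi> i \<omega> \<ge> w \<and> \<xi> j \<omega> \<ge> w")
      case True
      then have "\<omega> \<in> Aa" unfolding Aa_def using sp by blast
      then show ?thesis by simp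
    next
      case nA: False
      show ?thesis
      proof (cases "\<exists>i\<in>I. \<xi> i \<omega> \<ge> (1-\<delta>)*y")
        case True
        then obtain i where "i \<in> I" "\<xi> i \<omega> \<ge> (1-\<delta>)*y" by blast
        then have "\<omega> \<in> Bb" unfolding Bb_def using sp lty by fastforce
        then show ?thesis by simp
      next
        case nB: False
        show ?thesis
        proof (cases "\<exists>i\<in>I. \<xi> i \<omega> \<ge> w")
          case True
          then obtain i where i: "i \<in> I" "\<xi> i \<omega> \<ge> w" by blast
          have small: "\<xi> j \<omega> < w" if "j \<in> I - {i}" for j using nA i that by auto
          have "R i \<omega> = (\<Sum>j\<in>I-{i}. \<xi> j \<omega>)" unfolding R_def
            using small by (intro sum.cong) auto
          moreover have "(\<Sum>i\<in>I. \<xi> i \<omega>) = \<xi> i \<omega> + (\<Sum>j\<in>I-{i}. \<xi> j \<omega>)"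
            using i finI by (subst sum.remove[of I i]) auto
          moreover have "\<xi> i \<omega> < (1-\<delta>)*y" using nB i by auto
          ultimately have "R i \<omega> \<ge> real n * G + \<delta>*y" using ge by (simp add: algebra_simps)
          then have "\<omega> \<in> Cc" unfolding Cc_def using sp i by auto
          then show ?thesis by simp
        next
          case False
          then have "T \<omega> = (\<Sum>i\<in>I. \<xi> i \<omega>)" unfolding T_def by (intro sum.cong) auto
          then have "\<omega> \<in> Dd" unfolding Dd_def using sp ge by simp
          then show ?thesis by simp
        qed
      qed
    qed
  qed
  have Gw: "Gf w \<le> G" unfolding G_def using w by (intro G_mono) auto
  have Gw0: "Gf w \<ge> 0" using w by (intro G_nonneg) auto
  have "prob E1 - prob E2 = prob (E1 - E2)"
    using E1ev E2ev by (subst finite_measure_Diff) (auto simp: E2_def E1_def)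
  also have "\<dots> \<le> prob (Aa \<union> Bb \<union> Cc \<union> Dd)"
    using sub Aaev Bbev Ccev Ddev by (intro finite_measure_mono) auto
  also have "\<dots> \<le> prob Aa + prob Bb + prob Cc + prob Dd"
  proof -
    have "prob (Aa \<union> Bb \<union> Cc \<union> Dd) \<le> prob (Aa \<union> Bb \<union> Cc) + prob Dd"
      using Aaev Bbev Ccev Ddev by (intro measure_subadditive) auto
    moreover have "prob (Aa \<union> Bb \<union> Cc) \<le> prob (Aa \<union> Bb) + prob Cc"
      using Aaev Bbev Ccev by (intro measure_subadditive) auto
    moreover have "prob (Aa \<union> Bb) \<le> prob Aa + prob Bb"
      using Aaev Bbev by (intro measure_subadditive) auto
    ultimately show ?thesis by linarith
  qed
  also have "prob Aa \<le> (real n)^2 * (Fb w)^2"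
  proof -
    have "prob Aa \<le> (\<Sum>i\<in>I. prob (\<Union>j\<in>I-{i}. {\<omega>\<in>space M. \<xi> i \<omega> \<ge> w \<and> \<xi> j \<omega> \<ge> w}))"
      unfolding Aa_def using finI by (intro finite_measure_subadditive_finite) auto
    also have "\<dots> \<le> (\<Sum>i\<in>I. (\<Sum>j\<in>I-{i}. prob {\<omega>\<in>space M. \<xi> i \<omega> \<ge> w \<and> \<xi> j \<omega> \<ge> w}))"
      using finI by (intro sum_mono finite_measure_subadditive_finite) auto
    also have "\<dots> = (\<Sum>i\<in>I. (\<Sum>j\<in>I-{i}. (Fb w)^2))"
      by (intro sum.cong refl pair_ind) (auto simp: I_def)
    also have "\<dots> \<le> (\<Sum>i\<in>I. (\<Sum>j\<in>I. (Fb w)^2))"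
      using finI by (intro sum_mono sum_mono2) auto
    finally show ?thesis by (simp add: I_def power2_eq_square)
  qed
  also have "prob Bb \<le> real n * (Fb ((1-\<delta>)*y) - Fb y)"
  proof -
    have "prob Bb \<le> (\<Sum>i\<in>I. prob ({\<omega>\<in>space M. \<xi> i \<omega> \<ge> (1-\<delta>)*y} - {\<omega>\<in>space M. \<xi> i \<omega> \<ge> y}))"
      unfolding Bb_def using finI by (intro finite_measure_subadditive_finite) auto
    also have "\<dots> = (\<Sum>i\<in>I. Fb ((1-\<delta>)*y) - Fb y)"
    proof (intro sum.cong refl)
      fix i assume "i \<in> I"
      then have i1: "i \<ge> 1" by (simp add: I_def)
      have yd: "(1-\<delta>)*y \<le> y" using y d by (simp add: algebra_simps)
      show "prob ({\<omega>\<in>space M. \<xi> i \<omega> \<ge> (1-\<delta>)*y} - {\<omega>\<in>space M. \<xi> i \<omega> \<ge> y}) = Fb ((1-\<delta>)*y) - Fb y"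
        using i1 by (subst finite_measure_Diff) (auto simp: tail_eq dest: order_trans[OF yd])
    qed
    finally show ?thesis by (simp add: I_def)
  qed
  also have "prob Cc \<le> real n * Fb w * (real n * m2 w / (\<delta>*y)^2)"
  proof -
    have "prob Cc \<le> (\<Sum>i\<in>I. prob {\<omega>\<in>space M. \<xi> i \<omega> \<in> {w..} \<and> R i \<omega> \<in> {real n * G + \<delta>*y..}})"
      unfolding Cc_def using finI by (intro finite_measure_subadditive_finite) (auto simp: R_def)
    also have "\<dots> \<le> (\<Sum>i\<in>I. Fb w * (real n * m2 w / (\<delta>*y)^2))"
    proof (intro sum_mono)
      fix i assume i: "i \<in> I"
      then have i1: "i \<ge> 1" by (simp add: I_def)
      have "prob {\<omega>\<in>space M. \<xi> i \<omega> \<in> {w..} \<and> R i \<omega> \<in> {real n * G + \<delta>*y..}}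
         = prob {\<omega>\<in>space M. \<xi> i \<omega> \<in> {w..}} * prob {\<omega>\<in>space M. R i \<omega> \<in> {real n * G + \<delta>*y..}}"
        unfolding R_def using i1 finI by (intro indep_pair) (auto simp: I_def)
      also have "prob {\<omega>\<in>space M. \<xi> i \<omega> \<in> {w..}} = Fb w" using tail_eq[OF i1] by simp
      also have "prob {\<omega>\<in>space M. R i \<omega> \<in> {real n * G + \<delta>*y..}} \<le> real n * m2 w / (\<delta>*y)^2"
      proof -
        have cI: "card (I - {i}) = n - 1" using i by (simp add: I_def)
        have cR: "real (card (I - {i})) = real n - 1" using cI n by simp
        have "{\<omega>\<in>space M. R i \<omega> \<in> {real n * G + \<delta>*y..}}
          \<subseteq> {\<omega>\<in>space M. \<delta>*y \<le> \<bar>R i \<omega> - real (card (I - {i})) * Gf w\<bar>}"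
        proof (intro subsetI)
          fix \<omega> assume "\<omega> \<in> {\<omega>\<in>space M. R i \<omega> \<in> {real n * G + \<delta>*y..}}"
          then have sp: "\<omega> \<in> space M" and h: "R i \<omega> \<ge> real n * G + \<delta>*y" by auto
          have "real (card (I - {i})) * Gf w \<le> real n * Gf w" using cR Gw0 by (intro mult_right_mono) auto
          also have "\<dots> \<le> real n * G" using Gw by (intro mult_left_mono) auto
          finally have "real (card (I - {i})) * Gf w \<le> real n * G" .
          then have "\<delta>*y \<le> \<bar>R i \<omega> - real (card (I - {i})) * Gf w\<bar>" using h by linarith
          then show "\<omega> \<in> {\<omega>\<in>space M. \<delta>*y \<le> \<bar>R i \<omega> - real (card (I - {i})) * Gf w\<bar>}" using sp by simp
        qed
        then have "prob {\<omega>\<in>space M. R i \<omega> \<in> {real n * G + \<delta>*y..}}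
          \<le> prob {\<omega>\<in>space M. \<delta>*y \<le> \<bar>R i \<omega> - real (card (I - {i})) * Gf w\<bar>}"
          by (intro finite_measure_mono) (unfold R_def, measurable)
        also have "\<dots> \<le> real n * m2 w / (\<delta>*y)^2"
          unfolding R_def using w y d by (intro cheb_card) (auto simp: I_def)
        finally show ?thesis .
      qed
      then have "Fb w * prob {\<omega>\<in>space M. R i \<omega> \<in> {real n * G + \<delta>*y..}} \<le> Fb w * (real n * m2 w / (\<delta>*y)^2)"
        by (intro mult_left_mono Fb_nonneg)
      finally show "prob {\<omega>\<in>space M. \<xi> i \<omega> \<in> {w..} \<and> R i \<omega> \<in> {real n * G + \<delta>*y..}} \<le> Fb w * (real n * m2 w / (\<delta>*y)^2)" .
    qed
    finally show ?thesis by (simp add: I_def)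
  qed
  also have "prob Dd \<le> real n * m2 w / y^2"
  proof -
    have "Dd \<subseteq> {\<omega>\<in>space M. y \<le> \<bar>T \<omega> - real (card I) * Gf w\<bar>}"
    proof (intro subsetI)
      fix \<omega> assume "\<omega> \<in> Dd"
      then have sp: "\<omega> \<in> space M" and h: "T \<omega> \<ge> real n * G + y" unfolding Dd_def by auto
      have "real (card I) * Gf w \<le> real n * G" unfolding I_def using Gw by (simp add: mult_left_mono)
      then have "y \<le> \<bar>T \<omega> - real (card I) * Gf w\<bar>" using h by linarith
      then show "\<omega> \<in> {\<omega>\<in>space M. y \<le> \<bar>T \<omega> - real (card I) * Gf w\<bar>}" using sp by simp
    qed
    then have "prob Dd \<le> prob {\<omega>\<in>space M. y \<le> \<bar>T \<omega> - real (card I) * Gf w\<bar>}"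
      by (intro finite_measure_mono) (unfold T_def, measurable)
    also have "\<dots> \<le> real n * m2 w / y^2"
      unfolding T_def using w y by (intro cheb_card) (auto simp: I_def)
    finally show ?thesis .
  qed
  finally show ?thesis unfolding E1_def E2_def I_def G_def by simp
qed

end

locale hv_sv = hv M \<xi> for M :: "'a measure" and \<xi> +
  fixes l :: "real \<Rightarrow> real"
  assumes sv: "slowly_varying l" and tl: "\<forall>\<^sub>F t in at_top. hv.Fb M \<xi> t = l t / t"
begin

lemma ratio: "c > 0 \<Longrightarrow> ((\<lambda>t. Fb (c*t) / Fb t) \<longlongrightarrow> 1/c) at_top"
  using sv_ratio[OF sv tl] by blast

lemma Fb_pos: "Fb t > 0"
proof -
  have "((\<lambda>t. Fb (1*t) / Fb t) \<longlongrightarrow> 1/1) at_top" by (rule ratio) simp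
  then have "\<forall>\<^sub>F t in at_top. Fb (1*t) / Fb t > 1/2" by (rule order_tendstoD) simp
  then obtain N where N: "\<And>s. s \<ge> N \<Longrightarrow> Fb s / Fb s > 1/2"
    by (auto simp: eventually_at_top_linorder)
  have "Fb (max t N) \<noteq> 0" using N[of "max t N"] by auto
  then have "Fb (max t N) > 0" using Fb_nonneg[of "max t N"] by simp
  also have "Fb (max t N) \<le> Fb t" by (intro Fb_mono) simp
  finally show ?thesis .
qed

lemma potter: "\<exists>t0. t0 > 0 \<and> (\<forall>t\<ge>t0. Fb (t/2) \<le> 3 * Fb t)"
proof -
  have "((\<lambda>t. Fb ((1/2)*t) / Fb t) \<longlongrightarrow> 1/(1/2)) at_top" by (rule ratio) simp
  then have "\<forall>\<^sub>F t in at_top. Fb ((1/2)*t) / Fb t < 3" by (rule order_tendstoD) simp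
  then obtain N where N: "\<And>u. u \<ge> N \<Longrightarrow> Fb ((1/2) * u) / Fb u < 3"
    by (auto simp: eventually_at_top_linorder)
  show ?thesis
  proof (intro exI[of _ "max N 1"] conjI allI impI)
    fix t assume "t \<ge> max N 1"
    then have "Fb ((1/2)*t) / Fb t < 3" using N by auto
    then show "Fb (t/2) \<le> 3 * Fb t" using Fb_pos[of t] by (simp add: field_simps)
  qed simp
qed

lemma m2_O: "\<exists>C t1. C > 0 \<and> (\<forall>w\<ge>t1. m2 w \<le> C * w^2 * Fb w)"
proof -
  obtain t0 where t0: "t0 > 0" "\<And>t. t \<ge> t0 \<Longrightarrow> Fb (t/2) \<le> 3 * Fb t" using potter by blast
  have "\<forall>w\<ge>t0. m2 w \<le> (12 + 1 / Fb t0) * w^2 * Fb w"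
    using m2_bound[OF t0(1) Fb_pos t0(2)] by blast
  moreover have "12 + 1 / Fb t0 > 0" using Fb_pos[of t0] by (smt (verit) divide_pos_pos)
  ultimately show ?thesis by blast
qed

lemma G_pos: "x > 0 \<Longrightarrow> Gf x > 0"
  using G_lower1[of x] Fb_pos[of 1] by (smt (verit) mult_pos_pos)

lemma F3: "((\<lambda>x. x * Fb x / Gf x) \<longlongrightarrow> 0) at_top"
proof (rule order_tendstoI)
  fix a :: real assume "a < 0"
  then show "\<forall>\<^sub>F x in at_top. a < x * Fb x / Gf x"
    unfolding eventually_at_top_linorder
    by (intro exI[of _ 0] allI impI) (smt (verit) Fb_nonneg G_nonneg divide_nonneg_nonneg mult_nonneg_nonneg)
next
  fix \<epsilon> :: real assume eps: "0 < \<epsilon>"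
  define K where "K = nat (ceiling (4/\<epsilon>)) + 1"
  have K1: "K \<ge> 1" unfolding K_def by simp
  have K2: "4 / real K < \<epsilon>"
  proof -
    have "4/\<epsilon> < real K" unfolding K_def by linarith
    then show ?thesis using eps K1 by (simp add: field_simps)
  qed
  have lim: "((\<lambda>x. \<Sum>j<K. (1/2^(j+1)) * (Fb ((1/2^j)*x) / Fb x)) \<longlongrightarrow> (\<Sum>j<K. (1/2^(j+1)) * (1/(1/2^j)))) at_top"
    by (intro tendsto_sum tendsto_mult tendsto_const ratio) simp
  have sK: "(\<Sum>j<K. (1/2^(j+1)) * (1/(1/2^j))) = real K / 2"
    by (simp add: field_simps)
  have "\<forall>\<^sub>F x in at_top. (\<Sum>j<K. (1/2^(j+1)) * (Fb ((1/2^j)*x) / Fb x)) > real K / 4"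
    using lim unfolding sK by (rule order_tendstoD) (use K1 in simp)
  moreover have "\<forall>\<^sub>F x in at_top. x > (0::real)" by (rule eventually_gt_at_top)
  ultimately show "\<forall>\<^sub>F x in at_top. x * Fb x / Gf x < \<epsilon>"
  proof eventually_elim
    case (elim x)
    have Fx: "Fb x > 0" by (rule Fb_pos)
    have "x * Fb x * (real K / 4) < x * Fb x * (\<Sum>j<K. (1/2^(j+1)) * (Fb ((1/2^j)*x) / Fb x))"
      using elim Fx by (intro mult_strict_left_mono) auto
    also have "\<dots> = (\<Sum>j<K. (x/2^(j+1)) * Fb (x/2^j))"
      using Fx by (simp add: sum_distrib_left field_simps)
    also have "\<dots> \<le> Gf x" using G_lower[of x] elim by simp
    finally have "x * Fb x * (real K / 4) < Gf x" .
    then have "x * Fb x / Gf x < 4 / real K" using G_pos[of x] elim K1 Fx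
      by (simp add: field_simps)
    then show ?case using K2 by simp
  qed
qed


lemma eps_tendsto0:
  fixes f :: "nat \<Rightarrow> real"
  assumes "\<And>\<epsilon>. \<epsilon> > 0 \<Longrightarrow> \<forall>\<^sub>F n in sequentially. \<bar>f n\<bar> \<le> \<epsilon>"
  shows "f \<longlonglongrightarrow> 0"
  unfolding tendsto_iff
proof (intro allI impI)
  fix e :: real assume "e > 0"
  then have "\<forall>\<^sub>F n in sequentially. \<bar>f n\<bar> \<le> e/2" using assms[of "e/2"] by simp
  then show "\<forall>\<^sub>F n in sequentially. dist (f n) 0 < e"
    by eventually_elim (use \<open>e > 0\<close> in auto)
qed

end

locale hv_seq = hv_sv M \<xi> l for M :: "'a measure" and \<xi> l +
  fixes x a :: "nat \<Rightarrow> real" and a0 c :: real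
  assumes x_pos: "\<And>n. x n > 0" and c_pos: "c > 0"
    and xc: "\<forall>\<^sub>F n in sequentially. c * real n * hv.Gf M \<xi> (x n) \<le> x n"
    and a_lim: "a \<longlonglongrightarrow> a0" and a0_pos: "a0 > 0"
begin

lemma x_inf: "filterlim x at_top sequentially"
proof -
  have F1: "Fb 1 > 0" by (rule Fb_pos)
  have lim: "filterlim (\<lambda>n. c * Fb 1 * real n) at_top sequentially"
    using c_pos F1 by (intro filterlim_tendsto_pos_mult_at_top[OF tendsto_const] filterlim_real_sequentially) auto
  then have "\<forall>\<^sub>F n in sequentially. c * Fb 1 * real n > 1" by (simp add: filterlim_at_top_dense)
  then have "\<forall>\<^sub>F n in sequentially. c * Fb 1 * real n \<le> x n"
    using xc
  proof eventually_elim
    case (elim n)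
    have G1: "min (x n) 1 * Fb 1 \<le> Gf (x n)" using G_lower1[of "x n"] x_pos[of n] by simp
    show ?case
    proof (cases "x n < 1")
      case True
      then have "c * real n * (x n * Fb 1) \<le> c * real n * Gf (x n)"
        using G1 c_pos by (intro mult_left_mono) auto
      then have "c * Fb 1 * real n * x n \<le> 1 * x n" using elim by (simp add: algebra_simps)
      then have "c * Fb 1 * real n \<le> 1" using x_pos[of n] by (simp only: mult_le_cancel_right)
      then show ?thesis using elim by simp
    next
      case False
      then have "c * real n * Fb 1 \<le> c * real n * Gf (x n)"
        using G1 c_pos by (intro mult_left_mono) auto
      then show ?thesis using elim by (simp add: algebra_simps)
    qed
  qed
  then show ?thesis by (rule filterlim_at_top_mono[OF lim])
qed

lemma h_zero: "(\<lambda>n. x n * Fb (x n) / Gf (x n)) \<longlonglongrightarrow> 0"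
  using filterlim_compose[OF F3 x_inf] by simp

lemma nF_zero: "(\<lambda>n. real n * Fb (x n)) \<longlonglongrightarrow> 0"
proof (rule tendsto_sandwich[of "\<lambda>_. 0" _ _ "\<lambda>n. (x n * Fb (x n) / Gf (x n)) / c"])
  show "\<forall>\<^sub>F n in sequentially. 0 \<le> real n * Fb (x n)" by (simp add: Fb_nonneg)
  show "\<forall>\<^sub>F n in sequentially. real n * Fb (x n) \<le> (x n * Fb (x n) / Gf (x n)) / c"
    using xc
  proof eventually_elim
    case (elim n)
    have Gp: "Gf (x n) > 0" using G_pos x_pos by auto
    have "real n * Fb (x n) = (c * real n * Gf (x n)) * Fb (x n) / (c * Gf (x n))"
      using Gp c_pos by (simp add: field_simps)
    also have "\<dots> \<le> x n * Fb (x n) / (c * Gf (x n))"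
      using elim Gp c_pos Fb_nonneg[of "x n"] by (intro divide_right_mono mult_right_mono) auto
    finally show ?case by (simp add: field_simps)
  qed
  show "(\<lambda>n. 0) \<longlonglongrightarrow> (0::real)" by simp
  show "(\<lambda>n. (x n * Fb (x n) / Gf (x n)) / c) \<longlonglongrightarrow> 0"
    using tendsto_divide[OF h_zero tendsto_const[of c]] c_pos by simp
qed

lemma rx: "r > 0 \<Longrightarrow> (\<lambda>n. Fb (r * x n) / Fb (x n)) \<longlonglongrightarrow> 1/r"
  using filterlim_compose[OF ratio x_inf] by simp

lemma ratio_seq:
  assumes d: "d > 0"
  shows "(\<lambda>n. Fb (d * (a n * x n)) / Fb (x n)) \<longlonglongrightarrow> 1/(d*a0)"
proof (rule order_tendstoI)
  have da: "(\<lambda>n. d * a n) \<longlonglongrightarrow> d * a0" by (intro tendsto_mult tendsto_const a_lim)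
  have da0: "d * a0 > 0" using d a0_pos by simp
  fix u assume u: "u > 1/(d*a0)"
  then have u0: "u > 0" using da0 by (smt (verit) divide_pos_pos)
  have "1/u < d*a0" using u u0 da0 by (simp add: field_simps)
  define r where "r = (d*a0 + 1/u)/2"
  have r: "r > 0" "r < d*a0" "1/r < u"
    using \<open>1/u < d*a0\<close> u0 da0 unfolding r_def by (auto simp: field_simps)
  have "\<forall>\<^sub>F n in sequentially. d * a n > r" using da r by (intro order_tendstoD) auto
  moreover have "\<forall>\<^sub>F n in sequentially. Fb (r * x n) / Fb (x n) < u" using rx[OF r(1)] r by (intro order_tendstoD) auto
  ultimately show "\<forall>\<^sub>F n in sequentially. Fb (d * (a n * x n)) / Fb (x n) < u"
  proof eventually_elim
    case (elim n)
    have "Fb (d * (a n * x n)) \<le> Fb (r * x n)"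
      using elim x_pos[of n] by (intro Fb_mono) (simp add: mult.assoc[symmetric] mult_right_mono)
    then have "Fb (d * (a n * x n)) / Fb (x n) \<le> Fb (r * x n) / Fb (x n)"
      using Fb_pos[of "x n"] by (intro divide_right_mono) auto
    then show ?case using elim by simp
  qed
next
  have da: "(\<lambda>n. d * a n) \<longlonglongrightarrow> d * a0" by (intro tendsto_mult tendsto_const a_lim)
  have da0: "d * a0 > 0" using d a0_pos by simp
  fix u assume u: "u < 1/(d*a0)"
  show "\<forall>\<^sub>F n in sequentially. u < Fb (d * (a n * x n)) / Fb (x n)"
  proof (cases "u \<le> 0")
    case True
    then show ?thesis using Fb_pos by (intro always_eventually allI) (smt (verit) divide_pos_pos)
  next
    case False
    then have u0: "u > 0" by simp
    have "1/u > d*a0" using u u0 da0 by (simp add: field_simps)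
    define r where "r = (d*a0 + 1/u)/2"
    have r12: "r > d*a0" "r < 1/u" using \<open>1/u > d*a0\<close> unfolding r_def by (auto simp: mult.commute)
    then have "r * u < 1" using u0 by (simp add: field_simps)
    then have r: "r > 0" "r > d*a0" "1/r > u" using r12 da0 by (auto simp: field_simps)
    have "\<forall>\<^sub>F n in sequentially. d * a n < r" using order_tendstoD(2)[OF da r(2)] by simp
    moreover have "\<forall>\<^sub>F n in sequentially. Fb (r * x n) / Fb (x n) > u" using order_tendstoD(1)[OF rx[OF r(1)] r(3)] by simp
    ultimately show ?thesis
    proof eventually_elim
      case (elim n)
      have "Fb (r * x n) \<le> Fb (d * (a n * x n))"
        using elim x_pos[of n] by (intro Fb_mono) (simp add: mult.assoc[symmetric] mult_right_mono)
      then have "Fb (r * x n) / Fb (x n) \<le> Fb (d * (a n * x n)) / Fb (x n)"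
        using Fb_pos[of "x n"] by (intro divide_right_mono) auto
      then show ?case using elim by simp
    qed
  qed
qed


end


context hv_seq
begin

lemma ev_n1: "\<forall>\<^sub>F n in sequentially. n \<ge> (1::nat)"
  by (rule eventually_ge_at_top)

lemma Q_pos: "n \<ge> 1 \<Longrightarrow> real n * Fb (x n) / a0 > 0"
  using Fb_pos[of "x n"] a0_pos by simp

lemma LQ:
  assumes r: "r > 0"
  shows "(\<lambda>n. real n * Fb (r * (a n * x n)) / (real n * Fb (x n) / a0)) \<longlonglongrightarrow> 1/r"
proof -
  have "(\<lambda>n. a0 * (Fb (r * (a n * x n)) / Fb (x n))) \<longlonglongrightarrow> a0 * (1/(r*a0))"
    by (intro tendsto_mult tendsto_const ratio_seq r)
  moreover have "a0 * (1/(r*a0)) = 1/r" using a0_pos by simp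
  ultimately have lim: "(\<lambda>n. a0 * (Fb (r * (a n * x n)) / Fb (x n))) \<longlonglongrightarrow> 1/r" by simp
  have ev: "\<forall>\<^sub>F n in sequentially. a0 * (Fb (r * (a n * x n)) / Fb (x n))
      = real n * Fb (r * (a n * x n)) / (real n * Fb (x n) / a0)"
    using ev_n1
  proof eventually_elim
    case (elim n)
    have "Fb (x n) > 0" "real n > 0" using Fb_pos elim by auto
    then show ?case using a0_pos by (simp add: field_simps)
  qed
  show ?thesis by (rule Lim_transform_eventually[OF lim ev])
qed

lemma nFy0:
  assumes r: "r > 0"
  shows "(\<lambda>n. real n * Fb (r * (a n * x n))) \<longlonglongrightarrow> 0"
proof -
  have "(\<lambda>n. (real n * Fb (x n)) * (Fb (r * (a n * x n)) / Fb (x n))) \<longlonglongrightarrow> 0 * (1/(r*a0))"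
    by (intro tendsto_mult nF_zero ratio_seq r)
  moreover have "(\<lambda>n. (real n * Fb (x n)) * (Fb (r * (a n * x n)) / Fb (x n))) = (\<lambda>n. real n * Fb (r * (a n * x n)))"
  proof (rule ext)
    fix n
    have "Fb (x n) \<noteq> 0" using Fb_pos[of "x n"] by simp
    then show "(real n * Fb (x n)) * (Fb (r * (a n * x n)) / Fb (x n)) = real n * Fb (r * (a n * x n))" by simp
  qed
  ultimately show ?thesis by simp
qed

lemma Gx_small: "(\<lambda>n. Gf (x n) / x n) \<longlonglongrightarrow> 0"
proof (rule tendsto_sandwich[of "\<lambda>_. 0" _ _ "\<lambda>n. 1 / (c * real n)"])
  show "\<forall>\<^sub>F n in sequentially. 0 \<le> Gf (x n) / x n"
    using G_nonneg x_pos by (intro always_eventually allI) (simp add: less_imp_le)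
  show "\<forall>\<^sub>F n in sequentially. Gf (x n) / x n \<le> 1 / (c * real n)"
    using xc ev_n1
  proof eventually_elim
    case (elim n)
    then show ?case using x_pos[of n] c_pos by (simp add: field_simps)
  qed
  show "(\<lambda>n. 0) \<longlonglongrightarrow> (0::real)" by simp
  have "(\<lambda>n. inverse c * (1 / real n)) \<longlonglongrightarrow> inverse c * 0"
    by (intro tendsto_mult tendsto_const lim_1_over_n)
  then show "(\<lambda>n. 1 / (c * real n)) \<longlonglongrightarrow> 0" by (simp add: field_simps)
qed

lemma a_ev: "\<forall>\<^sub>F n in sequentially. a0/2 < a n \<and> a n < 2*a0"
proof -
  have "\<forall>\<^sub>F n in sequentially. a0/2 < a n" using a_lim a0_pos by (intro order_tendstoD) auto
  moreover have "\<forall>\<^sub>F n in sequentially. a n < 2*a0" using a_lim a0_pos by (intro order_tendstoD) auto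
  ultimately show ?thesis by eventually_elim auto
qed

lemma w_inf: "r > 0 \<Longrightarrow> filterlim (\<lambda>n. r * (a n * x n)) at_top sequentially"
proof -
  assume r: "r > 0"
  have ra: "(\<lambda>n. r * a n) \<longlonglongrightarrow> r * a0" by (intro tendsto_mult tendsto_const a_lim)
  have "filterlim (\<lambda>n. (r * a n) * x n) at_top sequentially"
    using r a0_pos by (intro filterlim_tendsto_pos_mult_at_top[OF ra _ x_inf]) auto
  then show ?thesis by (simp add: mult.assoc)
qed

lemma P3_lim:
  "(\<lambda>n. prob {\<omega>\<in>space M. \<exists>i\<in>{1..n}. \<xi> i \<omega> \<ge> a n * x n} / (real n * Fb (x n) / a0)) \<longlonglongrightarrow> 1"
proof (rule tendsto_sandwich[of "\<lambda>n. real n * Fb (1 * (a n * x n)) / (real n * Fb (x n) / a0)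
      - (real n * Fb (1 * (a n * x n)) / (real n * Fb (x n) / a0)) * (real n * Fb (1 * (a n * x n)))" _ _
      "\<lambda>n. real n * Fb (1 * (a n * x n)) / (real n * Fb (x n) / a0)"])
  show "\<forall>\<^sub>F n in sequentially. real n * Fb (1 * (a n * x n)) / (real n * Fb (x n) / a0)
      - (real n * Fb (1 * (a n * x n)) / (real n * Fb (x n) / a0)) * (real n * Fb (1 * (a n * x n)))
      \<le> prob {\<omega>\<in>space M. \<exists>i\<in>{1..n}. \<xi> i \<omega> \<ge> a n * x n} / (real n * Fb (x n) / a0)"
    using ev_n1
  proof eventually_elim
    case (elim n)
    have Q: "real n * Fb (x n) / a0 > 0" using Q_pos elim by simp
    define p where "p = real n * Fb (a n * x n)"
    define Qv where "Qv = real n * Fb (x n) / a0"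
    have "p - p^2 \<le> prob {\<omega>\<in>space M. \<exists>i\<in>{1..n}. \<xi> i \<omega> \<ge> a n * x n}"
      using P3_lower[of n "a n * x n"] unfolding p_def by (simp add: power_mult_distrib)
    then have "(p - p^2) / Qv \<le> prob {\<omega>\<in>space M. \<exists>i\<in>{1..n}. \<xi> i \<omega> \<ge> a n * x n} / Qv"
      using Q unfolding Qv_def by (intro divide_right_mono) auto
    moreover have "p / Qv - (p / Qv) * p = (p - p^2) / Qv" by (simp add: power2_eq_square diff_divide_distrib)
    ultimately have "p / Qv - (p / Qv) * p \<le> prob {\<omega>\<in>space M. \<exists>i\<in>{1..n}. \<xi> i \<omega> \<ge> a n * x n} / Qv"
      by simp
    then show ?case unfolding p_def Qv_def by simp
  qed
  show "\<forall>\<^sub>F n in sequentially. prob {\<omega>\<in>space M. \<exists>i\<in>{1..n}. \<xi> i \<omega> \<ge> a n * x n} / (real n * Fb (x n) / a0)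
     \<le> real n * Fb (1 * (a n * x n)) / (real n * Fb (x n) / a0)"
    using ev_n1
  proof eventually_elim
    case (elim n)
    have Q: "real n * Fb (x n) / a0 > 0" using Q_pos elim by simp
    have "prob {\<omega>\<in>space M. \<exists>i\<in>{1..n}. \<xi> i \<omega> \<ge> a n * x n} / (real n * Fb (x n) / a0)
       \<le> real n * Fb (a n * x n) / (real n * Fb (x n) / a0)"
      using P3_upper[of n "a n * x n"] Q by (intro divide_right_mono) auto
    then show ?case by simp
  qed
  have "(\<lambda>n. real n * Fb (1 * (a n * x n)) / (real n * Fb (x n) / a0)
      - (real n * Fb (1 * (a n * x n)) / (real n * Fb (x n) / a0)) * (real n * Fb (1 * (a n * x n)))) \<longlonglongrightarrow> 1/1 - 1/1 * 0"
    by (intro tendsto_diff tendsto_mult LQ nFy0) auto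
  then show "(\<lambda>n. real n * Fb (1 * (a n * x n)) / (real n * Fb (x n) / a0)
      - (real n * Fb (1 * (a n * x n)) / (real n * Fb (x n) / a0)) * (real n * Fb (1 * (a n * x n)))) \<longlonglongrightarrow> 1"
    by simp
  show "(\<lambda>n. real n * Fb (1 * (a n * x n)) / (real n * Fb (x n) / a0)) \<longlonglongrightarrow> 1"
    using LQ[of 1] by simp
qed


lemma P32_ev:
  assumes eps: "\<epsilon> > 0"
  shows "\<forall>\<^sub>F n in sequentially.
    prob {\<omega>\<in>space M. \<exists>i\<in>{1..n}. \<xi> i \<omega> \<ge> a n * x n}
    - prob {\<omega>\<in>space M. (\<Sum>i\<in>{1..n}. \<xi> i \<omega>) - real n * Gf (x n) \<ge> a n * x n \<and> (\<exists>i\<in>{1..n}. \<xi> i \<omega> \<ge> a n * x n)}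
    \<le> \<epsilon> * (real n * Fb (x n) / a0)"
proof -
  obtain C t1 where C: "C > 0" "\<And>w. w \<ge> t1 \<Longrightarrow> m2 w \<le> C * w^2 * Fb w" using m2_O by blast
  define \<delta> where "\<delta> = \<epsilon>"
  have d: "\<delta> > 0" using eps by (simp add: \<delta>_def)
  define Q where "Q n = real n * Fb (x n) / a0" for n
  define V where "V n = 4 * C * (real n * Fb (x n)) / (\<delta>^2 * (a n)^2)" for n
  define L1 where "L1 n = real n * Fb (1 * (a n * x n)) / Q n" for n
  define Ld where "Ld n = real n * Fb ((1+\<delta>) * (a n * x n)) / Q n" for n
  have V0: "V \<longlonglongrightarrow> 4 * C * 0 / (\<delta>^2 * a0^2)"
    unfolding V_def by (intro tendsto_divide tendsto_mult tendsto_const nF_zero tendsto_power a_lim)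
      (use d a0_pos in auto)
  have "(\<lambda>n. L1 n - Ld n + Ld n * V n) \<longlonglongrightarrow> 1/1 - 1/(1+\<delta>) + 1/(1+\<delta>) * (4 * C * 0 / (\<delta>^2 * a0^2))"
    unfolding L1_def Ld_def Q_def using d by (intro tendsto_add tendsto_diff tendsto_mult LQ V0) auto
  moreover have "1/1 - 1/(1+\<delta>) + 1/(1+\<delta>) * (4 * C * 0 / (\<delta>^2 * a0^2)) < \<epsilon>"
    using d by (simp add: \<delta>_def field_simps)
  ultimately have evU: "\<forall>\<^sub>F n in sequentially. L1 n - Ld n + Ld n * V n < \<epsilon>"
    by (rule order_tendstoD)
  have evx: "\<forall>\<^sub>F n in sequentially. x n \<ge> t1" using x_inf by (simp add: filterlim_at_top)
  have evG: "\<forall>\<^sub>F n in sequentially. Gf (x n) / x n < \<delta> * a0 / 4"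
    using Gx_small d a0_pos by (intro order_tendstoD) auto
  show ?thesis
    using evU evx evG a_ev ev_n1
  proof eventually_elim
    case (elim n)
    define y where "y = a n * x n"
    have xp: "x n > 0" by (rule x_pos)
    have an: "a n > a0/2" "a n > 0" using elim a0_pos by auto
    have yp: "y > 0" unfolding y_def using xp an by simp
    have Qp: "Q n > 0" unfolding Q_def using Q_pos elim by simp
    have "Gf (x n) < \<delta> * a0 / 4 * x n" using elim xp by (simp add: field_simps)
    also have "\<dots> \<le> \<delta> * y / 2" unfolding y_def using an xp d
      by (simp add: field_simps mult_right_mono)
    finally have Gx: "Gf (x n) \<le> \<delta> * y / 2" by simp
    have main: "prob {\<omega>\<in>space M. \<exists>i\<in>{1..n}. \<xi> i \<omega> \<ge> y}
       - prob {\<omega>\<in>space M. (\<Sum>i\<in>{1..n}. \<xi> i \<omega>) - real n * Gf (x n) \<ge> y \<and> (\<exists>i\<in>{1..n}. \<xi> i \<omega> \<ge> y)}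
     \<le> real n * (Fb y - Fb ((1+\<delta>)*y)) + real n * Fb ((1+\<delta>)*y) * (real n * m2 (x n) / (\<delta>*y/2)^2)"
      using elim yp d Gx xp by (intro P32) auto
    have "real n * m2 (x n) / (\<delta>*y/2)^2 \<le> real n * (C * (x n)^2 * Fb (x n)) / (\<delta>*y/2)^2"
      using C(2)[of "x n"] elim by (intro divide_right_mono mult_left_mono) auto
    also have "\<dots> = V n" unfolding V_def y_def using xp an d
      by (simp add: field_simps power2_eq_square)
    finally have mV: "real n * m2 (x n) / (\<delta>*y/2)^2 \<le> V n" .
    have "real n * Fb ((1+\<delta>)*y) * (real n * m2 (x n) / (\<delta>*y/2)^2) \<le> real n * Fb ((1+\<delta>)*y) * V n"
      using mV Fb_nonneg by (intro mult_left_mono) auto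
    with main have "prob {\<omega>\<in>space M. \<exists>i\<in>{1..n}. \<xi> i \<omega> \<ge> y}
       - prob {\<omega>\<in>space M. (\<Sum>i\<in>{1..n}. \<xi> i \<omega>) - real n * Gf (x n) \<ge> y \<and> (\<exists>i\<in>{1..n}. \<xi> i \<omega> \<ge> y)}
     \<le> real n * (Fb y - Fb ((1+\<delta>)*y)) + real n * Fb ((1+\<delta>)*y) * V n" by linarith
    also have "\<dots> = Q n * (L1 n - Ld n + Ld n * V n)"
      unfolding L1_def Ld_def y_def using Qp by (simp add: field_simps)
    also have "\<dots> \<le> Q n * \<epsilon>" using elim Qp by (intro mult_left_mono) auto
    finally show ?case unfolding y_def Q_def by (simp add: mult.commute)
  qed
qed


lemma P12_ev:
  assumes eps: "\<epsilon> > 0"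
  shows "\<forall>\<^sub>F n in sequentially.
    prob {\<omega>\<in>space M. (\<Sum>i\<in>{1..n}. \<xi> i \<omega>) - real n * Gf (x n) \<ge> a n * x n}
    - prob {\<omega>\<in>space M. (\<Sum>i\<in>{1..n}. \<xi> i \<omega>) - real n * Gf (x n) \<ge> a n * x n \<and> (\<exists>i\<in>{1..n}. \<xi> i \<omega> \<ge> a n * x n)}
    \<le> \<epsilon> * (real n * Fb (x n) / a0)"
proof -
  obtain C t1 where C: "C > 0" "\<And>w. w \<ge> t1 \<Longrightarrow> m2 w \<le> C * w^2 * Fb w" using m2_O by blast
  define \<delta> where "\<delta> = min (1/2) (\<epsilon>/4)"
  define \<eta> where "\<eta> = min (1/(2*a0)) (\<epsilon>/(4*C))"
  have d: "\<delta> > 0" "\<delta> \<le> 1/2" "\<delta> \<le> \<epsilon>/4" using eps by (auto simp: \<delta>_def)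
  have e: "\<eta> > 0" "\<eta> \<le> 1/(2*a0)" "\<eta> \<le> \<epsilon>/(4*C)" using eps C a0_pos by (auto simp: \<eta>_def)
  define Q where "Q n = real n * Fb (x n) / a0" for n
  define W where "W n = real n * Fb (\<eta> * (a n * x n))" for n
  define L1 where "L1 n = real n * Fb (1 * (a n * x n)) / Q n" for n
  define Lm where "Lm n = real n * Fb ((1-\<delta>) * (a n * x n)) / Q n" for n
  define Le where "Le n = real n * Fb (\<eta> * (a n * x n)) / Q n" for n
  define U where "U n = Le n * W n + (Lm n - L1 n) + Le n * (C * \<eta>^2 * W n / \<delta>^2) + C * \<eta>^2 * Le n" for n
  have W0: "W \<longlonglongrightarrow> 0" unfolding W_def using e by (intro nFy0) auto
  have "U \<longlonglongrightarrow> 1/\<eta> * 0 + (1/(1-\<delta>) - 1/1) + 1/\<eta> * (C * \<eta>^2 * 0 / \<delta>^2) + C * \<eta>^2 * (1/\<eta>)"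
    unfolding U_def Le_def Lm_def L1_def Q_def using d e
    by (intro tendsto_add tendsto_diff tendsto_mult tendsto_divide tendsto_const LQ W0) auto
  moreover have "1/\<eta> * 0 + (1/(1-\<delta>) - 1/1) + 1/\<eta> * (C * \<eta>^2 * 0 / \<delta>^2) + C * \<eta>^2 * (1/\<eta>) < \<epsilon>"
  proof -
    have "1/(1-\<delta>) - 1 = \<delta>/(1-\<delta>)" using d by (simp add: field_simps)
    also have "\<dots> \<le> \<delta> / (1/2)" using d by (intro divide_left_mono) auto
    finally have t1: "1/(1-\<delta>) - 1 \<le> \<epsilon>/2" using d by simp
    have "C * \<eta>^2 * (1/\<eta>) = C * \<eta>" using e by (simp add: power2_eq_square)
    also have "\<dots> \<le> C * (\<epsilon>/(4*C))" using e C by (intro mult_left_mono) auto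
    also have "\<dots> = \<epsilon>/4" using C by simp
    finally have t2: "C * \<eta>^2 * (1/\<eta>) \<le> \<epsilon>/4" .
    have "1/\<eta> * 0 + (1/(1-\<delta>) - 1/1) + 1/\<eta> * (C * \<eta>^2 * 0 / \<delta>^2) + C * \<eta>^2 * (1/\<eta>)
      = (1/(1-\<delta>) - 1) + C * \<eta>^2 * (1/\<eta>)" by simp
    then show ?thesis using t1 t2 eps by linarith
  qed
  ultimately have evU: "\<forall>\<^sub>F n in sequentially. U n < \<epsilon>" by (rule order_tendstoD)
  have evw: "\<forall>\<^sub>F n in sequentially. \<eta> * (a n * x n) \<ge> t1" using w_inf[OF e(1)] by (simp add: filterlim_at_top)
  show ?thesis
    using evU evw a_ev ev_n1
  proof eventually_elim
    case (elim n)
    define y where "y = a n * x n"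
    define w where "w = \<eta> * y"
    have xp: "x n > 0" by (rule x_pos)
    have an: "a n < 2*a0" "a n > 0" using elim a0_pos by auto
    have yp: "y > 0" unfolding y_def using xp an by simp
    have wp: "w > 0" unfolding w_def using yp e by simp
    have "\<eta> * a n \<le> 1/(2*a0) * (2*a0)" using e an by (intro mult_mono) auto
    then have "\<eta> * a n \<le> 1" using a0_pos by simp
    then have "(\<eta> * a n) * x n \<le> 1 * x n" using xp by (intro mult_right_mono) auto
    then have wx: "w \<le> x n" unfolding w_def y_def by (simp add: mult.assoc)
    have Qp: "Q n > 0" unfolding Q_def using Q_pos elim by simp
    have main: "prob {\<omega>\<in>space M. (\<Sum>i\<in>{1..n}. \<xi> i \<omega>) - real n * Gf (x n) \<ge> y}
       - prob {\<omega>\<in>space M. (\<Sum>i\<in>{1..n}. \<xi> i \<omega>) - real n * Gf (x n) \<ge> y \<and> (\<exists>i\<in>{1..n}. \<xi> i \<omega> \<ge> y)}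
     \<le> (real n)^2 * (Fb w)^2 + real n * (Fb ((1-\<delta>)*y) - Fb y)
        + real n * Fb w * (real n * m2 w / (\<delta>*y)^2) + real n * m2 w / y^2"
      using elim yp wp wx d by (intro P12) auto
    have mw: "m2 w \<le> C * w^2 * Fb w" using C(2) elim unfolding w_def y_def by simp
    have Wn: "W n = real n * Fb w" unfolding W_def w_def y_def ..
    have b1: "real n * m2 w / (\<delta>*y)^2 \<le> C * \<eta>^2 * W n / \<delta>^2"
    proof -
      have "real n * m2 w / (\<delta>*y)^2 \<le> real n * (C * w^2 * Fb w) / (\<delta>*y)^2"
        using mw by (intro divide_right_mono mult_left_mono) auto
      also have "\<dots> = C * \<eta>^2 * W n / \<delta>^2"
      proof -
        have "real n * (C * w^2 * Fb w) / (\<delta>*y)^2 = C * \<eta>^2 * (real n * Fb w) / \<delta>^2 * (y^2 / y^2)"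
          unfolding w_def by (simp add: power_mult_distrib)
        also have "y^2 / y^2 = 1" using yp by simp
        finally show ?thesis using Wn by simp
      qed
      finally show ?thesis .
    qed
    have b2: "real n * m2 w / y^2 \<le> C * \<eta>^2 * W n"
    proof -
      have "real n * m2 w / y^2 \<le> real n * (C * w^2 * Fb w) / y^2"
        using mw by (intro divide_right_mono mult_left_mono) auto
      also have "\<dots> = C * \<eta>^2 * W n"
      proof -
        have "real n * (C * w^2 * Fb w) / y^2 = C * \<eta>^2 * (real n * Fb w) * (y^2 / y^2)"
          unfolding w_def by (simp add: power_mult_distrib)
        also have "y^2 / y^2 = 1" using yp by simp
        finally show ?thesis using Wn by simp
      qed
      finally show ?thesis .
    qed
    have b1': "real n * Fb w * (real n * m2 w / (\<delta>*y)^2) \<le> real n * Fb w * (C * \<eta>^2 * W n / \<delta>^2)"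
      using b1 Fb_nonneg by (intro mult_left_mono) auto
    have "prob {\<omega>\<in>space M. (\<Sum>i\<in>{1..n}. \<xi> i \<omega>) - real n * Gf (x n) \<ge> y}
       - prob {\<omega>\<in>space M. (\<Sum>i\<in>{1..n}. \<xi> i \<omega>) - real n * Gf (x n) \<ge> y \<and> (\<exists>i\<in>{1..n}. \<xi> i \<omega> \<ge> y)}
     \<le> (real n)^2 * (Fb w)^2 + real n * (Fb ((1-\<delta>)*y) - Fb y)
        + real n * Fb w * (C * \<eta>^2 * W n / \<delta>^2) + C * \<eta>^2 * W n"
      using main b1' b2 by linarith
    also have "\<dots> = Q n * U n"
    proof -
      have q: "\<And>t. Q n * (t / Q n) = t" using Qp by simp
      have QLe: "Q n * Le n = W n" unfolding Le_def W_def by (rule q)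
      have QLm: "Q n * Lm n = real n * Fb ((1-\<delta>)*y)" unfolding Lm_def y_def by (rule q)
      have QL1: "Q n * L1 n = real n * Fb y" unfolding L1_def y_def using q[of "real n * Fb (1 * (a n * x n))"] by simp
      have "Q n * U n = (Q n * Le n) * W n + (Q n * Lm n - Q n * L1 n) + (Q n * Le n) * (C * \<eta>^2 * W n / \<delta>^2)
          + C * \<eta>^2 * (Q n * Le n)"
        unfolding U_def by (simp add: algebra_simps)
      also have "\<dots> = W n * W n + (real n * Fb ((1-\<delta>)*y) - real n * Fb y) + W n * (C * \<eta>^2 * W n / \<delta>^2)
          + C * \<eta>^2 * W n"
        unfolding QLe QLm QL1 ..
      finally show ?thesis using Wn by (simp add: power2_eq_square algebra_simps)
    qed
    also have "\<dots> \<le> Q n * \<epsilon>" using elim Qp by (intro mult_left_mono) auto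
    finally show ?case unfolding y_def Q_def by (simp add: mult.commute)
  qed
qed

end


theorem proposition1:
  fixes M :: "'a measure" and \<xi> :: "nat \<Rightarrow> 'a \<Rightarrow> real"
    and x :: "nat \<Rightarrow> real" and a :: "nat \<Rightarrow> real" and a0 :: real
  assumes "prob_space M"
    and rv: "\<And>i. i \<ge> 1 \<Longrightarrow> \<xi> i \<in> borel_measurable M"
    and indep: "prob_space.indep_vars M (\<lambda>_. borel) \<xi> {1..}"
    and ident: "\<And>i. i \<ge> 1 \<Longrightarrow> distr M borel (\<xi> i) = distr M borel (\<xi> 1)"
    and nonneg: "\<And>i \<omega>. i \<ge> 1 \<Longrightarrow> \<omega> \<in> space M \<Longrightarrow> \<xi> i \<omega> \<ge> 0"
    and tail: "\<exists>l. slowly_varying l \<and>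
      (\<forall>\<^sub>F t in at_top. measure M {\<omega> \<in> space M. \<xi> 1 \<omega> \<ge> t} = l t / t)"
    and x_pos: "\<And>n. x n > 0"
    and x_liminf: "liminf (\<lambda>n. ereal (x n / (real n *
        (LBINT t=0..x n. measure M {\<omega> \<in> space M. \<xi> 1 \<omega> \<ge> t})))) > 0"
    and a_pos: "\<And>n. a n > 0"
    and a_lim: "a \<longlonglongrightarrow> a0" and a0_pos: "a0 > 0"
  shows
   "let Fbar = (\<lambda>t. measure M {\<omega> \<in> space M. \<xi> 1 \<omega> \<ge> t});
        G = (\<lambda>s. LBINT t=0..s. Fbar t);
        S = (\<lambda>n \<omega>. \<Sum>i\<in>{1..n}. \<xi> i \<omega>);
        Mx = (\<lambda>n \<omega>. Max ((\<lambda>i. \<xi> i \<omega>) ` {1..n}));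
        P1 = (\<lambda>n. measure M {\<omega> \<in> space M. S n \<omega> - real n * G (x n) \<ge> a n * x n});
        P2 = (\<lambda>n. measure M {\<omega> \<in> space M. S n \<omega> - real n * G (x n) \<ge> a n * x n
                                          \<and> Mx n \<omega> \<ge> a n * x n});
        P3 = (\<lambda>n. measure M {\<omega> \<in> space M. Mx n \<omega> \<ge> a n * x n});
        Q = (\<lambda>n. real n * Fbar (x n) / a0)
    in P1 \<sim>[sequentially] P2 \<and> P2 \<sim>[sequentially] P3 \<and> P3 \<sim>[sequentially] Q
       \<and> Q \<longlonglongrightarrow> 0"
proof -
  interpret prob_space M by fact
  define \<xi>' where "\<xi>' i = (if i = 0 then (\<lambda>_. 0::real) else \<xi> i)" for i
  have \<xi>'_eq: "i \<ge> 1 \<Longrightarrow> \<xi>' i = \<xi> i" for i by (simp add: \<xi>'_def)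
  have \<xi>'1: "\<xi>' 1 = \<xi> 1" "\<xi>' (Suc 0) = \<xi> 1" by (simp_all add: \<xi>'_def)
  interpret H: hv M \<xi>'
  proof
    show "\<xi>' i \<in> borel_measurable M" for i
      using rv[of i] by (cases "i = 0") (auto simp: \<xi>'_def)
    show "indep_vars (\<lambda>_. borel) \<xi>' {1..}"
      using indep by (rule indep_vars_cong[THEN iffD1, rotated 3]) (auto simp: \<xi>'_eq)
    show "distr M borel (\<xi>' i) = distr M borel (\<xi>' 1)" if "i \<ge> 1" for i
      using ident[OF that] that by (simp add: \<xi>'_eq)
    show "\<xi>' i \<omega> \<ge> 0" if "i \<ge> 1" "\<omega> \<in> space M" for i \<omega>
      using nonneg[OF that] that by (simp add: \<xi>'_eq)
  qed
  have Fb_eq: "H.Fb t = measure M {\<omega> \<in> space M. \<xi> 1 \<omega> \<ge> t}" for t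
    unfolding H.Fb_def \<xi>'1 ..
  have Gf_eq: "H.Gf s = (LBINT t=0..s. measure M {\<omega> \<in> space M. \<xi> 1 \<omega> \<ge> t})" for s
    unfolding H.Gf_def Fb_eq ..
  obtain l where l: "slowly_varying l" "\<forall>\<^sub>F t in at_top. H.Fb t = l t / t"
    using tail unfolding Fb_eq[symmetric] by blast
  interpret S: hv_sv M \<xi>' l by unfold_locales (fact l)+
  obtain z where z: "0 < z" "z < liminf (\<lambda>n. ereal (x n / (real n * H.Gf (x n))))"
    using x_liminf unfolding Gf_eq[symmetric] using dense by blast
  have "z \<noteq> \<infinity>" using z(2) by auto
  then obtain c where cz: "z = ereal c" using z(1) by (cases z) auto
  have c: "c > 0" using z(1) cz by simp
  have evc: "\<forall>\<^sub>F n in sequentially. ereal (x n / (real n * H.Gf (x n))) > z"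
    using z(2) by (rule less_LiminfD)
  have xc: "\<forall>\<^sub>F n in sequentially. c * real n * H.Gf (x n) \<le> x n"
    using evc eventually_ge_at_top[of 1]
  proof eventually_elim
    case (elim n)
    have Gp: "H.Gf (x n) > 0" using S.G_pos x_pos by auto
    have "c < x n / (real n * H.Gf (x n))" using elim cz by simp
    then have "c * (real n * H.Gf (x n)) < x n" using Gp elim by (simp add: field_simps)
    then show ?case by (simp add: mult.assoc)
  qed
  interpret Q: hv_seq M \<xi>' l x a a0 c
    by unfold_locales (use x_pos c xc a_lim a0_pos in auto)
  define Qn where "Qn n = real n * H.Fb (x n) / a0" for n
  define L1 where "L1 n = prob {\<omega>\<in>space M. (\<Sum>i\<in>{1..n}. \<xi>' i \<omega>) - real n * H.Gf (x n) \<ge> a n * x n}" for n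
  define L2 where "L2 n = prob {\<omega>\<in>space M. (\<Sum>i\<in>{1..n}. \<xi>' i \<omega>) - real n * H.Gf (x n) \<ge> a n * x n
       \<and> (\<exists>i\<in>{1..n}. \<xi>' i \<omega> \<ge> a n * x n)}" for n
  define L3 where "L3 n = prob {\<omega>\<in>space M. \<exists>i\<in>{1..n}. \<xi>' i \<omega> \<ge> a n * x n}" for n
  have Qp: "Qn n > 0" if "n \<ge> 1" for n unfolding Qn_def using Q.Q_pos[OF that] .
  have L23: "L2 n \<le> L3 n" for n unfolding L2_def L3_def
    by (intro finite_measure_mono) auto
  have L21: "L2 n \<le> L1 n" for n unfolding L2_def L1_def
    by (intro finite_measure_mono) auto
  have t3: "(\<lambda>n. L3 n / Qn n) \<longlonglongrightarrow> 1" unfolding L3_def Qn_def by (rule Q.P3_lim)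
  have d32: "(\<lambda>n. (L3 n - L2 n) / Qn n) \<longlonglongrightarrow> 0"
  proof (rule S.eps_tendsto0)
    fix \<epsilon> :: real assume e: "\<epsilon> > 0"
    show "\<forall>\<^sub>F n in sequentially. \<bar>(L3 n - L2 n) / Qn n\<bar> \<le> \<epsilon>"
      using Q.P32_ev[OF e] eventually_ge_at_top[of 1]
    proof eventually_elim
      case (elim n)
      have "L3 n - L2 n \<le> \<epsilon> * Qn n" using elim(1) unfolding L3_def L2_def Qn_def .
      then show ?case using Qp[OF elim(2)] L23[of n] by (simp add: field_simps)
    qed
  qed
  have d12: "(\<lambda>n. (L1 n - L2 n) / Qn n) \<longlonglongrightarrow> 0"
  proof (rule S.eps_tendsto0)
    fix \<epsilon> :: real assume e: "\<epsilon> > 0"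
    show "\<forall>\<^sub>F n in sequentially. \<bar>(L1 n - L2 n) / Qn n\<bar> \<le> \<epsilon>"
      using Q.P12_ev[OF e] eventually_ge_at_top[of 1]
    proof eventually_elim
      case (elim n)
      have "L1 n - L2 n \<le> \<epsilon> * Qn n" using elim(1) unfolding L1_def L2_def Qn_def .
      then show ?case using Qp[OF elim(2)] L21[of n] by (simp add: field_simps)
    qed
  qed
  have t2: "(\<lambda>n. L2 n / Qn n) \<longlonglongrightarrow> 1"
  proof -
    have "(\<lambda>n. L3 n / Qn n - (L3 n - L2 n) / Qn n) \<longlonglongrightarrow> 1 - 0" by (intro tendsto_diff t3 d32)
    then show ?thesis by (simp add: diff_divide_distrib)
  qed
  have t1: "(\<lambda>n. L1 n / Qn n) \<longlonglongrightarrow> 1"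
  proof -
    have "(\<lambda>n. L2 n / Qn n + (L1 n - L2 n) / Qn n) \<longlonglongrightarrow> 1 + 0" by (intro tendsto_add t2 d12)
    then show ?thesis by (simp add: diff_divide_distrib)
  qed
  have tQ: "Qn \<longlonglongrightarrow> 0"
  proof -
    have "(\<lambda>n. real n * H.Fb (x n) / a0) \<longlonglongrightarrow> 0 / a0" by (intro tendsto_divide Q.nF_zero tendsto_const) (use a0_pos in auto)
    then show ?thesis unfolding Qn_def by simp
  qed
  define P1 where "P1 n = measure M {\<omega> \<in> space M. (\<Sum>i\<in>{1..n}. \<xi> i \<omega>) - real n * (LBINT t=0..x n. measure M {\<omega> \<in> space M. \<xi> 1 \<omega> \<ge> t}) \<ge> a n * x n}" for n
  define P2 where "P2 n = measure M {\<omega> \<in> space M. (\<Sum>i\<in>{1..n}. \<xi> i \<omega>) - real n * (LBINT t=0..x n. measure M {\<omega> \<in> space M. \<xi> 1 \<omega> \<ge> t}) \<ge> a n * x n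
       \<and> Max ((\<lambda>i. \<xi> i \<omega>) ` {1..n}) \<ge> a n * x n}" for n
  define P3 where "P3 n = measure M {\<omega> \<in> space M. Max ((\<lambda>i. \<xi> i \<omega>) ` {1..n}) \<ge> a n * x n}" for n
  define Q where "Q n = real n * measure M {\<omega> \<in> space M. \<xi> 1 \<omega> \<ge> x n} / a0" for n
  have QQ: "Q = Qn" unfolding Q_def Qn_def Fb_eq by simp
  have sumeq: "(\<Sum>i\<in>{1..n}. \<xi>' i \<omega>) = (\<Sum>i\<in>{1..n}. \<xi> i \<omega>)" for n \<omega>
    by (intro sum.cong) (auto simp: \<xi>'_eq)
  have maxeq: "Max ((\<lambda>i. \<xi> i \<omega>) ` {1..n}) \<ge> y \<longleftrightarrow> (\<exists>i\<in>{1..n}. \<xi>' i \<omega> \<ge> y)" if "n \<ge> 1" for n \<omega> y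
    using that by (subst Max_ge_iff) (auto simp: \<xi>'_eq)
  have PL1: "P1 n = L1 n" for n unfolding P1_def L1_def sumeq Gf_eq ..
  have PL2: "P2 n = L2 n" if "n \<ge> 1" for n unfolding P2_def L2_def sumeq Gf_eq maxeq[OF that] ..
  have PL3: "P3 n = L3 n" if "n \<ge> 1" for n unfolding P3_def L3_def maxeq[OF that] ..
  have e1: "(\<lambda>n. P1 n / Q n) \<longlonglongrightarrow> 1" using t1 unfolding QQ PL1 .
  have e2: "(\<lambda>n. P2 n / Q n) \<longlonglongrightarrow> 1"
  proof (rule Lim_transform_eventually[OF t2])
    show "\<forall>\<^sub>F n in sequentially. L2 n / Qn n = P2 n / Q n"
      using eventually_ge_at_top[of 1] by eventually_elim (simp add: PL2 QQ)
  qed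
  have e3: "(\<lambda>n. P3 n / Q n) \<longlonglongrightarrow> 1"
  proof (rule Lim_transform_eventually[OF t3])
    show "\<forall>\<^sub>F n in sequentially. L3 n / Qn n = P3 n / Q n"
      using eventually_ge_at_top[of 1] by eventually_elim (simp add: PL3 QQ)
  qed
  have q1: "P1 \<sim>[sequentially] Q" by (rule asymp_equivI'[OF e1])
  have q2: "P2 \<sim>[sequentially] Q" by (rule asymp_equivI'[OF e2])
  have q3: "P3 \<sim>[sequentially] Q" by (rule asymp_equivI'[OF e3])
  have main: "P1 \<sim>[sequentially] P2 \<and> P2 \<sim>[sequentially] P3 \<and> P3 \<sim>[sequentially] Q \<and> Q \<longlonglongrightarrow> 0"
    using asymp_equiv_trans[OF q1 asymp_equiv_symI[OF q2]] asymp_equiv_trans[OF q2 asymp_equiv_symI[OF q3]] q3 tQ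
    unfolding QQ by simp
  show ?thesis unfolding Let_def using main unfolding P1_def[abs_def] P2_def[abs_def] P3_def[abs_def] Q_def[abs_def] .
qed

end
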